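(* Let $p\in(0,1)$ be a constant and $G_n\sim G(n,p)$. Let $F$ be a graph such that $\mathrm{wsat}(K_n,F)=(c_F+o(1))n$ as $n\to\infty$ for some constant $c_F\geq 0$. Then with probability tending to $1$ as $n\to\infty$, $$\mathrm{rk}\text{-}\mathrm{sat}(G_n,F)\leq\lfloor c_F\rfloor n+(\log n)^{O(1)}.$$
   Context: $G(n,p)$ is the binomial random graph on $[n]$. $\mathrm{wsat}(G,F)$ is the minimum number of edges of a spanning subgraph $H\subseteq G$ from which $G$ can be obtained by adding missing edges one at a time, each added edge creating a new copy of $F$ containing it. A matroid $M$ on $E(G)$ is weakly $F$-saturated if every copy $\tilde F$ of $F$ in $G$ is a cycle of $M$, i.e. $\mathrm{rk}_M(E(\tilde F)\setminus\{e\})=\mathrm{rk}_M(E(\tilde F))$ for all $e\in E(\tilde F)$; $\mathrm{rk}\text{-}\mathrm{sat}(G,F)$ is the maximum rank of such a matroid. The term $(\log n)^{O(1)}$ means $(\log n)^{D}$ for some constant $D$ not depending on $n$. *)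

theory Defs
  imports Complex_Main
begin

text \<open>Graphs on the vertex set [n] = {0..<n} are represented by their edge sets,
  an edge being a 2-element set of vertices.\<close>

definition all_edges :: "nat \<Rightarrow> nat set set" where
  "all_edges n = {e. \<exists>a b. a < n \<and> b < n \<and> a \<noteq> b \<and> e = {a, b}}"

definition is_graph :: "nat set \<Rightarrow> nat set set \<Rightarrow> bool" where
  "is_graph VF EF \<longleftrightarrow> finite VF \<and> EF \<subseteq> {e. \<exists>a b. a \<in> VF \<and> b \<in> VF \<and> a \<noteq> b \<and> e = {a, b}}"

definition copies :: "nat \<Rightarrow> nat set \<Rightarrow> nat set set \<Rightarrow> nat set set \<Rightarrow> nat set set set" where
  "copies n VF EF S =
     {(\<lambda>e. f ` e) ` EF | f. inj_on f VF \<and> f ` VF \<subseteq> {..<n} \<and> (\<lambda>e. f ` e) ` EF \<subseteq> S}"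

text \<open>Weak saturation process: H \<subseteq> G and the missing edges of G can be added one at a
  time, each added edge lying in a copy of F in the current graph (i.e. a new copy).\<close>

definition wsat_process :: "nat \<Rightarrow> nat set set \<Rightarrow> nat set \<Rightarrow> nat set set \<Rightarrow> nat set set \<Rightarrow> bool" where
  "wsat_process n G VF EF H \<longleftrightarrow> H \<subseteq> G \<and>
     (\<exists>es. distinct es \<and> set es = G - H \<and>
        (\<forall>i < length es. \<exists>C \<in> copies n VF EF (H \<union> set (take (Suc i) es)). es ! i \<in> C))"

definition wsat :: "nat \<Rightarrow> nat set set \<Rightarrow> nat set \<Rightarrow> nat set set \<Rightarrow> nat" where
  "wsat n G VF EF = (LEAST k. \<exists>H. wsat_process n G VF EF H \<and> card H = k)"

definition matroid :: "'a set \<Rightarrow> 'a set set \<Rightarrow> bool" where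
  "matroid E I \<longleftrightarrow> finite E \<and> I \<subseteq> Pow E \<and> {} \<in> I \<and>
     (\<forall>X Y. X \<in> I \<and> Y \<subseteq> X \<longrightarrow> Y \<in> I) \<and>
     (\<forall>X Y. X \<in> I \<and> Y \<in> I \<and> card X < card Y \<longrightarrow> (\<exists>y \<in> Y - X. insert y X \<in> I))"

definition mrank :: "'a set set \<Rightarrow> 'a set \<Rightarrow> nat" where
  "mrank I X = Max {card Y | Y. Y \<in> I \<and> Y \<subseteq> X}"

text \<open>Weakly F-saturated matroid on E(G): every copy of F in G is a cycle.\<close>

definition weakly_sat_matroid :: "nat \<Rightarrow> nat set set \<Rightarrow> nat set \<Rightarrow> nat set set \<Rightarrow> nat set set set \<Rightarrow> bool" where
  "weakly_sat_matroid n G VF EF I \<longleftrightarrow> matroid G I \<and>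
     (\<forall>C \<in> copies n VF EF G. \<forall>e \<in> C. mrank I (C - {e}) = mrank I C)"

definition rk_sat :: "nat \<Rightarrow> nat set set \<Rightarrow> nat set \<Rightarrow> nat set set \<Rightarrow> nat" where
  "rk_sat n G VF EF = Max {mrank I G | I. weakly_sat_matroid n G VF EF I}"

definition prob_Gnp :: "nat \<Rightarrow> real \<Rightarrow> (nat set set \<Rightarrow> bool) \<Rightarrow> real" where
  "prob_Gnp n p P = (\<Sum>G \<in> Pow (all_edges n).
     if P G then p ^ card G * (1 - p) ^ (card (all_edges n) - card G) else 0)"

end

theory Submission
  imports Defs "HOL-Library.FuncSet"
begin


context
  fixes E :: "'a set" and I :: "'a set set"
  assumes M: "matroid E I"
begin

lemma m_finE: "finite E" using M unfolding matroid_def by blast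
lemma m_sub: "Y \<in> I \<Longrightarrow> Y \<subseteq> E" using M unfolding matroid_def by blast
lemma m_empty: "{} \<in> I" using M unfolding matroid_def by blast
lemma m_down: "X \<in> I \<Longrightarrow> Y \<subseteq> X \<Longrightarrow> Y \<in> I" using M unfolding matroid_def by blast
lemma m_aug: "X \<in> I \<Longrightarrow> Y \<in> I \<Longrightarrow> card X < card Y \<Longrightarrow> \<exists>y\<in>Y - X. insert y X \<in> I"
  using M unfolding matroid_def by blast
lemma m_finI: "finite I"
proof -
  have "I \<subseteq> Pow E" using m_sub by blast
  moreover have "finite (Pow E)" using m_finE by simp
  ultimately show ?thesis by (rule finite_subset)
qed

lemma m_rset_fin: "finite {card Y | Y. Y \<in> I \<and> Y \<subseteq> X}"
proof -
  have "{card Y | Y. Y \<in> I \<and> Y \<subseteq> X} \<subseteq> card ` I" by blast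
  then show ?thesis using m_finI finite_subset by blast
qed

lemma m_rset_ne: "{card Y | Y. Y \<in> I \<and> Y \<subseteq> X} \<noteq> {}"
  using m_empty by blast

lemma r_ge: "Y \<in> I \<Longrightarrow> Y \<subseteq> X \<Longrightarrow> card Y \<le> mrank I X"
  unfolding mrank_def using m_rset_fin by (intro Max_ge) auto

lemma r_obtain: "\<exists>Y. Y \<in> I \<and> Y \<subseteq> X \<and> card Y = mrank I X"
proof -
  have "mrank I X \<in> {card Y | Y. Y \<in> I \<and> Y \<subseteq> X}"
    unfolding mrank_def using m_rset_fin m_rset_ne by (rule Max_in)
  then show ?thesis by auto
qed

lemma r_le_card: "X \<subseteq> E \<Longrightarrow> mrank I X \<le> card X"
proof -
  assume X: "X \<subseteq> E"
  obtain Y where Y: "Y \<in> I" "Y \<subseteq> X" "card Y = mrank I X" using r_obtain by blast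
  have fX: "finite X" using finite_subset[OF X m_finE] .
  show ?thesis using card_mono[OF fX Y(2)] Y(3) by simp
qed

lemma r_mono: "X \<subseteq> Y \<Longrightarrow> mrank I X \<le> mrank I Y"
proof -
  assume XY: "X \<subseteq> Y"
  obtain Z where "Z \<in> I" "Z \<subseteq> X" "card Z = mrank I X" using r_obtain by blast
  then show ?thesis using r_ge[of Z Y] XY by auto
qed

lemma r_extend: "J \<in> I \<Longrightarrow> J \<subseteq> X \<Longrightarrow> \<exists>B. B \<in> I \<and> J \<subseteq> B \<and> B \<subseteq> X \<and> card B = mrank I X"
proof (induction "mrank I X - card J" arbitrary: J rule: less_induct)
  case less
  have le: "card J \<le> mrank I X" using r_ge less.prems by blast
  show ?case
  proof (cases "card J = mrank I X")
    case True then show ?thesis using less.prems by blast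
  next
    case False
    then have lt: "card J < mrank I X" using le by simp
    obtain Y where Y: "Y \<in> I" "Y \<subseteq> X" "card Y = mrank I X" using r_obtain by blast
    then obtain y where y: "y \<in> Y - J" "insert y J \<in> I" using m_aug[of J Y] less.prems lt by auto
    have finJ: "finite J" using finite_subset[OF m_sub[OF less.prems(1)] m_finE] .
    have c: "card (insert y J) = Suc (card J)" using y finJ by simp
    have "mrank I X - card (insert y J) < mrank I X - card J" using c lt by simp
    moreover have "insert y J \<subseteq> X" using y Y less.prems by blast
    ultimately obtain B where "B \<in> I" "insert y J \<subseteq> B" "B \<subseteq> X" "card B = mrank I X"
      using less.hyps y by blast
    then show ?thesis by blast
  qed
qed

lemma r_submod: "X \<subseteq> E \<Longrightarrow> Y \<subseteq> E \<Longrightarrow> mrank I (X \<union> Y) + mrank I (X \<inter> Y) \<le> mrank I X + mrank I Y"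
proof -
  assume XE: "X \<subseteq> E" and YE: "Y \<subseteq> E"
  obtain B0 where B0: "B0 \<in> I" "B0 \<subseteq> X \<inter> Y" "card B0 = mrank I (X \<inter> Y)" using r_obtain by blast
  obtain B where B: "B \<in> I" "B0 \<subseteq> B" "B \<subseteq> X \<union> Y" "card B = mrank I (X \<union> Y)"
    using r_extend[of B0 "X \<union> Y"] B0 by blast
  have finB: "finite B" using finite_subset[OF m_sub[OF B(1)] m_finE] .
  have "B \<inter> (X \<inter> Y) \<in> I" using m_down B by blast
  then have "card (B \<inter> (X \<inter> Y)) \<le> mrank I (X \<inter> Y)" by (rule r_ge) blast
  then have c1: "card (B \<inter> (X \<inter> Y)) \<le> card B0" using B0(3) by simp
  have c2: "card (B \<inter> X) \<le> mrank I X" using r_ge[of "B \<inter> X" X] m_down[of B "B \<inter> X"] B by auto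
  have c3: "card (B \<inter> Y) \<le> mrank I Y" using r_ge[of "B \<inter> Y" Y] m_down[of B "B \<inter> Y"] B by auto
  have cc: "card (B \<inter> X) + card (B \<inter> Y) = card ((B \<inter> X) \<union> (B \<inter> Y)) + card ((B \<inter> X) \<inter> (B \<inter> Y))"
    using card_Un_Int[of "B \<inter> X" "B \<inter> Y"] finB by auto
  have e1: "(B \<inter> X) \<union> (B \<inter> Y) = B" using B by blast
  have e2: "(B \<inter> X) \<inter> (B \<inter> Y) = B \<inter> (X \<inter> Y)" by blast
  have cc2: "card (B \<inter> X) + card (B \<inter> Y) = card B + card (B \<inter> (X \<inter> Y))" using cc unfolding e1 e2 .
  moreover have "card (B \<inter> (X \<inter> Y)) \<ge> card B0" using B B0 finB card_mono[of "B \<inter> (X \<inter> Y)" B0]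
    by (metis finite_Int le_inf_iff order_refl)
  ultimately show ?thesis using c1 c2 c3 B(4) B0(3) cc2 by linarith
qed

lemma r_union_le: "X \<subseteq> E \<Longrightarrow> Y \<subseteq> E \<Longrightarrow> mrank I (X \<union> Y) \<le> mrank I X + card Y"
  using r_submod[of X Y] r_le_card[of Y] by linarith

lemma span_set: "finite Z \<Longrightarrow> X \<subseteq> E \<Longrightarrow> Z \<subseteq> E \<Longrightarrow> (\<forall>z\<in>Z. mrank I (insert z X) = mrank I X)
   \<Longrightarrow> mrank I (X \<union> Z) = mrank I X"
proof (induction Z rule: finite_induct)
  case empty then show ?case by simp
next
  case (insert z Z)
  have IH: "mrank I (X \<union> Z) = mrank I X" using insert by blast
  have s0: "mrank I ((X \<union> Z) \<union> insert z X) + mrank I ((X \<union> Z) \<inter> insert z X) \<le> mrank I (X \<union> Z) + mrank I (insert z X)"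
    using r_submod[of "X \<union> Z" "insert z X"] insert.prems by auto
  have eqz: "(X \<union> Z) \<union> insert z X = X \<union> insert z Z" by blast
  have s: "mrank I (X \<union> insert z Z) + mrank I ((X \<union> Z) \<inter> insert z X) \<le> mrank I (X \<union> Z) + mrank I (insert z X)"
    using s0 unfolding eqz .
  have "mrank I X \<le> mrank I ((X \<union> Z) \<inter> insert z X)" by (rule r_mono) blast
  moreover have "mrank I (insert z X) = mrank I X" using insert.prems by simp
  ultimately have "mrank I (X \<union> insert z Z) \<le> mrank I X" using s IH by linarith
  moreover have "mrank I X \<le> mrank I (X \<union> insert z Z)" by (rule r_mono) blast
  ultimately show ?case by linarith
qed

lemma span_cycle:
  assumes "C \<subseteq> E" "X \<subseteq> E" "e \<in> C" "mrank I (C - {e}) = mrank I C"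
    and "\<forall>c\<in>C - {e}. mrank I (insert c X) = mrank I X"
  shows "mrank I (insert e X) = mrank I X"
proof -
  have finC: "finite C" using finite_subset[OF assms(1) m_finE] .
  have s0: "mrank I ((X \<union> (C - {e})) \<union> C) + mrank I ((X \<union> (C - {e})) \<inter> C) \<le> mrank I (X \<union> (C - {e})) + mrank I C"
    using r_submod[of "X \<union> (C - {e})" C] assms by auto
  have eqc: "(X \<union> (C - {e})) \<union> C = X \<union> C" by blast
  have s: "mrank I (X \<union> C) + mrank I ((X \<union> (C - {e})) \<inter> C) \<le> mrank I (X \<union> (C - {e})) + mrank I C"
    using s0 unfolding eqc .
  have "mrank I (C - {e}) \<le> mrank I ((X \<union> (C - {e})) \<inter> C)" by (rule r_mono) blast
  then have a: "mrank I (X \<union> C) \<le> mrank I (X \<union> (C - {e}))" using s assms(4) by linarith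
  have b: "mrank I (X \<union> (C - {e})) = mrank I X" using span_set[of "C - {e}" X] finC assms by auto
  have "mrank I (insert e X) \<le> mrank I (X \<union> C)" by (rule r_mono) (use assms(3) in blast)
  moreover have "mrank I X \<le> mrank I (insert e X)" by (rule r_mono) blast
  ultimately show ?thesis using a b by linarith
qed

end


definition wt :: "real \<Rightarrow> 'a set \<Rightarrow> 'a set \<Rightarrow> real" where
  "wt p E G = p ^ card G * (1 - p) ^ (card E - card G)"

definition pr :: "real \<Rightarrow> 'a set \<Rightarrow> ('a set \<Rightarrow> bool) \<Rightarrow> real" where
  "pr p E P = (\<Sum>G \<in> Pow E. if P G then wt p E G else 0)"

lemma prob_Gnp_pr: "prob_Gnp n p P = pr p (all_edges n) P"
  unfolding prob_Gnp_def pr_def wt_def by simp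

lemma wt_split:
  assumes "finite E" "B \<subseteq> E" "X \<subseteq> B" "Y \<subseteq> E - B"
  shows "wt p E (X \<union> Y) = wt p B X * wt p (E - B) Y"
proof -
  have fB: "finite B" using finite_subset[OF assms(2) assms(1)] .
  have fX: "finite X" "finite Y" using finite_subset[OF assms(3) fB] finite_subset[OF assms(4)] assms(1) by auto
  have d: "X \<inter> Y = {}" using assms by blast
  have cU: "card (X \<union> Y) = card X + card Y" using card_Un_disjoint[OF fX d] .
  have cE: "card E = card B + card (E - B)" using assms fB
    by (metis card_Diff_subset card_mono diff_add_inverse le_add_diff_inverse)
  have cX: "card X \<le> card B" using card_mono[OF fB assms(3)] .
  have cY: "card Y \<le> card (E - B)" using card_mono assms by (metis finite_Diff)
  have e: "card E - (card X + card Y) = (card B - card X) + (card (E - B) - card Y)"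
    using cE cX cY by simp
  show ?thesis unfolding wt_def cU e power_add by (simp add: algebra_simps)
qed

lemma pr_factor:
  assumes "finite E" "B \<subseteq> E"
  shows "pr p E (\<lambda>G. P (G \<inter> B) \<and> Q (G - B)) = pr p B P * pr p (E - B) Q"
proof -
  let ?h = "\<lambda>(X, Y). X \<union> Y"
  have inj: "inj_on ?h (Pow B \<times> Pow (E - B))"
  proof (rule inj_onI)
    fix a b assume a: "a \<in> Pow B \<times> Pow (E - B)" and b: "b \<in> Pow B \<times> Pow (E - B)" and e: "?h a = ?h b"
    have "a = (?h a \<inter> B, ?h a - B)" using a by (cases a) auto
    moreover have "b = (?h b \<inter> B, ?h b - B)" using b by (cases b) auto
    ultimately show "a = b" using e by simp
  qed
  have im: "?h ` (Pow B \<times> Pow (E - B)) = Pow E"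
  proof
    show "?h ` (Pow B \<times> Pow (E - B)) \<subseteq> Pow E" using assms by auto
    show "Pow E \<subseteq> ?h ` (Pow B \<times> Pow (E - B))"
    proof
      fix G assume "G \<in> Pow E"
      then have "G = ?h (G \<inter> B, G - B)" "(G \<inter> B, G - B) \<in> Pow B \<times> Pow (E - B)" by auto
      then show "G \<in> ?h ` (Pow B \<times> Pow (E - B))" by blast
    qed
  qed
  have "pr p E (\<lambda>G. P (G \<inter> B) \<and> Q (G - B)) =
      (\<Sum>G\<in>?h ` (Pow B \<times> Pow (E - B)). if P (G \<inter> B) \<and> Q (G - B) then wt p E G else 0)"
    unfolding pr_def im ..
  also have "\<dots> = (\<Sum>XY\<in>Pow B \<times> Pow (E - B). if P (?h XY \<inter> B) \<and> Q (?h XY - B) then wt p E (?h XY) else 0)"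
    by (rule sum.reindex_cong[OF inj refl]) (rule refl)
  also have "\<dots> = (\<Sum>XY\<in>Pow B \<times> Pow (E - B). (if P (fst XY) then wt p B (fst XY) else 0) * (if Q (snd XY) then wt p (E - B) (snd XY) else 0))"
  proof (rule sum.cong[OF refl])
    fix XY assume a: "XY \<in> Pow B \<times> Pow (E - B)"
    obtain X Y where xy: "XY = (X, Y)" by (cases XY)
    have X: "X \<subseteq> B" and Y: "Y \<subseteq> E - B" using a xy by auto
    have "(X \<union> Y) \<inter> B = X" "(X \<union> Y) - B = Y" using X Y by auto
    then show "(if P (?h XY \<inter> B) \<and> Q (?h XY - B) then wt p E (?h XY) else 0) =
       (if P (fst XY) then wt p B (fst XY) else 0) * (if Q (snd XY) then wt p (E - B) (snd XY) else 0)"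
      using xy wt_split[OF assms X Y] by simp
  qed
  also have "\<dots> = pr p B P * pr p (E - B) Q"
    unfolding pr_def sum_product sum.cartesian_product by (simp add: case_prod_beta)
  finally show ?thesis .
qed

lemma pr_single: "pr p {x} P = (if P {} then 1 - p else 0) + (if P {x} then p else 0)"
proof -
  have "Pow {x} = {{}, {x}}" by blast
  then show ?thesis unfolding pr_def wt_def by simp
qed

lemma pr_true: "finite E \<Longrightarrow> pr p E (\<lambda>_. True) = 1"
proof (induction E rule: finite_induct)
  case empty then show ?case unfolding pr_def wt_def by simp
next
  case (insert x E)
  have "pr p (insert x E) (\<lambda>_. True) = pr p (insert x E) (\<lambda>G. (\<lambda>_. True) (G \<inter> {x}) \<and> (\<lambda>_. True) (G - {x}))" by simp
  also have "\<dots> = pr p {x} (\<lambda>_. True) * pr p (insert x E - {x}) (\<lambda>_. True)"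
    using insert by (intro pr_factor) auto
  also have "insert x E - {x} = E" using insert by auto
  finally show ?case using insert pr_single[of p x "\<lambda>_. True"] by simp
qed

context fixes p :: real assumes p0: "0 \<le> p" and p1: "p \<le> 1"
begin

lemma wt_nonneg: "0 \<le> wt p E G" unfolding wt_def using p0 p1 by simp

lemma pr_nonneg: "0 \<le> pr p E P" unfolding pr_def using wt_nonneg by (intro sum_nonneg) auto

lemma pr_mono: "finite E \<Longrightarrow> (\<And>G. G \<subseteq> E \<Longrightarrow> P G \<Longrightarrow> Q G) \<Longrightarrow> pr p E P \<le> pr p E Q"
  unfolding pr_def using wt_nonneg by (intro sum_mono) auto

lemma pr_not: "finite E \<Longrightarrow> pr p E (\<lambda>G. \<not> P G) = 1 - pr p E P"
proof -
  assume f: "finite E"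
  have "pr p E (\<lambda>G. \<not> P G) + pr p E P = pr p E (\<lambda>_. True)"
    unfolding pr_def by (subst sum.distrib[symmetric]) (intro sum.cong, auto)
  then show ?thesis using pr_true[OF f, of p] by linarith
qed

lemma pr_le1: "finite E \<Longrightarrow> pr p E P \<le> 1"
  using pr_not[of E P] pr_nonneg[of E "\<lambda>G. \<not> P G"] by linarith

lemma pr_or: "finite E \<Longrightarrow> pr p E (\<lambda>G. P G \<or> Q G) \<le> pr p E P + pr p E Q"
  unfolding pr_def using wt_nonneg by (subst sum.distrib[symmetric]) (intro sum_mono, auto)

lemma pr_union: assumes fE: "finite E" and fJ: "finite J" shows "pr p E (\<lambda>G. \<exists>j\<in>J. P j G) \<le> (\<Sum>j\<in>J. pr p E (P j))"
  using fJ
proof (induction J rule: finite_induct)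
  case empty then show ?case unfolding pr_def by simp
next
  case (insert j J)
  have "pr p E (\<lambda>G. \<exists>i\<in>insert j J. P i G) = pr p E (\<lambda>G. P j G \<or> (\<exists>i\<in>J. P i G))" by simp
  also have "\<dots> \<le> pr p E (P j) + pr p E (\<lambda>G. \<exists>i\<in>J. P i G)" by (rule pr_or[OF fE])
  finally show ?case using insert by simp
qed

end

lemma pr_all_in: "finite E \<Longrightarrow> T \<subseteq> E \<Longrightarrow> pr p E (\<lambda>G. T \<subseteq> G) = p ^ card T"
proof -
  assume f: "finite E" and T: "T \<subseteq> E"
  have "pr p E (\<lambda>G. T \<subseteq> G) = pr p E (\<lambda>G. (\<lambda>X. X = T) (G \<inter> T) \<and> (\<lambda>_. True) (G - T))"
    by (intro arg_cong[where f="pr p E"]) auto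
  also have "\<dots> = pr p T (\<lambda>X. X = T) * pr p (E - T) (\<lambda>_. True)" by (rule pr_factor[OF f T])
  also have "pr p (E - T) (\<lambda>_. True) = 1" by (rule pr_true) (use f in simp)
  also have "pr p T (\<lambda>X. X = T) = p ^ card T"
  proof -
    have "pr p T (\<lambda>X. X = T) = (\<Sum>G\<in>Pow T. if G = T then wt p T G else 0)" unfolding pr_def ..
    also have "\<dots> = wt p T T" using finite_subset[OF T f] by (simp add: sum.delta)
    finally show ?thesis unfolding wt_def by simp
  qed
  finally show ?thesis by simp
qed

lemma pr_none_in: "finite E \<Longrightarrow> T \<subseteq> E \<Longrightarrow> pr p E (\<lambda>G. T \<inter> G = {}) = (1 - p) ^ card T"
proof -
  assume f: "finite E" and T: "T \<subseteq> E"
  have "pr p E (\<lambda>G. T \<inter> G = {}) = pr p E (\<lambda>G. (\<lambda>X. X = {}) (G \<inter> T) \<and> (\<lambda>_. True) (G - T))"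
    by (intro arg_cong[where f="pr p E"]) auto
  also have "\<dots> = pr p T (\<lambda>X. X = {}) * pr p (E - T) (\<lambda>_. True)" by (rule pr_factor[OF f T])
  also have "pr p (E - T) (\<lambda>_. True) = 1" by (rule pr_true) (use f in simp)
  also have "pr p T (\<lambda>X. X = {}) = (1 - p) ^ card T"
  proof -
    have "pr p T (\<lambda>X. X = {}) = (\<Sum>G\<in>Pow T. if G = {} then wt p T G else 0)" unfolding pr_def ..
    also have "\<dots> = wt p T {}" using finite_subset[OF T f] by (simp add: sum.delta)
    finally show ?thesis unfolding wt_def by simp
  qed
  finally show ?thesis by simp
qed

lemma pr_blocks:
  fixes k :: nat
  shows "finite E \<Longrightarrow> (\<forall>j<k. T j \<subseteq> E) \<Longrightarrow> (\<forall>i<k. \<forall>j<k. i \<noteq> j \<longrightarrow> T i \<inter> T j = {}) \<Longrightarrow>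
   pr p E (\<lambda>G. \<forall>j<k. \<not> T j \<subseteq> G) = (\<Prod>j<k. 1 - p ^ card (T j))"
proof (induction k arbitrary: E)
  case 0
  then show ?case using pr_true by simp
next
  case (Suc k)
  let ?B = "T k"
  have B: "?B \<subseteq> E" using Suc.prems by simp
  have "pr p E (\<lambda>G. \<forall>j<Suc k. \<not> T j \<subseteq> G) =
        pr p E (\<lambda>G. (\<lambda>X. X \<noteq> ?B) (G \<inter> ?B) \<and> (\<lambda>Y. \<forall>j<k. \<not> T j \<subseteq> Y) (G - ?B))"
  proof (intro arg_cong[where f="pr p E"] ext)
    fix G
    have "\<forall>j<k. (T j \<subseteq> G) = (T j \<subseteq> G - ?B)"
    proof (intro allI impI)
      fix j assume j: "j < k"
      then have "T j \<inter> T k = {}" using Suc.prems(3) by simp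
      then show "(T j \<subseteq> G) = (T j \<subseteq> G - ?B)" by blast
    qed
    moreover have "(T k \<subseteq> G) = (G \<inter> ?B = ?B)" by blast
    ultimately show "(\<forall>j<Suc k. \<not> T j \<subseteq> G) = ((G \<inter> ?B \<noteq> ?B) \<and> (\<forall>j<k. \<not> T j \<subseteq> G - ?B))"
      using less_Suc_eq by auto
  qed
  also have "\<dots> = pr p ?B (\<lambda>X. X \<noteq> ?B) * pr p (E - ?B) (\<lambda>Y. \<forall>j<k. \<not> T j \<subseteq> Y)"
    by (rule pr_factor[OF Suc.prems(1) B])
  also have "pr p (E - ?B) (\<lambda>Y. \<forall>j<k. \<not> T j \<subseteq> Y) = (\<Prod>j<k. 1 - p ^ card (T j))"
  proof (rule Suc.IH)
    show "finite (E - T k)" using Suc.prems by simp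
    show "\<forall>j<k. T j \<subseteq> E - T k"
    proof (intro allI impI)
      fix j assume j: "j < k"
      then have "T j \<inter> T k = {}" "T j \<subseteq> E" using Suc.prems(2,3) by auto
      then show "T j \<subseteq> E - T k" by blast
    qed
    show "\<forall>i<k. \<forall>j<k. i \<noteq> j \<longrightarrow> T i \<inter> T j = {}" using Suc.prems by auto
  qed
  also have "pr p ?B (\<lambda>X. X \<noteq> ?B) = 1 - p ^ card ?B"
  proof -
    have fB: "finite ?B" using finite_subset[OF B Suc.prems(1)] .
    have "pr p ?B (\<lambda>X. \<not> ?B \<subseteq> X) = 1 - pr p ?B (\<lambda>X. ?B \<subseteq> X)"
    proof -
      have "pr p ?B (\<lambda>X. \<not> ?B \<subseteq> X) + pr p ?B (\<lambda>X. ?B \<subseteq> X) = pr p ?B (\<lambda>_. True)"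
        unfolding pr_def by (subst sum.distrib[symmetric]) (intro sum.cong, auto)
      then show ?thesis using pr_true[OF fB, of p] by linarith
    qed
    moreover have "pr p ?B (\<lambda>X. ?B \<subseteq> X) = p ^ card ?B" by (rule pr_all_in[OF fB subset_refl])
    moreover have "pr p ?B (\<lambda>X. \<not> ?B \<subseteq> X) = pr p ?B (\<lambda>X. X \<noteq> ?B)"
      unfolding pr_def by (intro sum.cong) auto
    ultimately show ?thesis by simp
  qed
  finally show ?case by (simp add: mult.commute)
qed


definition aa :: "nat \<Rightarrow> nat" where "aa n = nat \<lceil>(ln (real n))^2\<rceil>"

lemma aa_ge: "real (aa n) \<ge> (ln (real n))^2"
  unfolding aa_def by linarith

lemma aa_le: "real (aa n) \<le> (ln (real n))^2 + 1"
  unfolding aa_def by (simp add: of_nat_nat)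

lemma ev_ln_ge: "eventually (\<lambda>n. ln (real n) \<ge> M) sequentially"
proof -
  have "filterlim (\<lambda>n. ln (real n)) at_top sequentially"
    using filterlim_compose[OF ln_at_top filterlim_real_sequentially] by simp
  then show ?thesis by (simp add: filterlim_at_top)
qed

lemma ext_bound_ev:
  fixes s r :: nat and q :: real
  assumes r: "r \<ge> 1" and q: "q > 0"
  shows "eventually (\<lambda>n. real n ^ s * exp (- q * real ((aa n - s) div r)) \<le> 1 / real n) sequentially"
proof -
  define M where "M = real r * (real s + 1) / q + real s + real r + 1"
  have M1: "M \<ge> 1" unfolding M_def using q by (simp add: field_simps)
  have ev1: "eventually (\<lambda>n. ln (real n) \<ge> M) sequentially" by (rule ev_ln_ge)
  have ev2: "eventually (\<lambda>n. n \<ge> 1) sequentially" by (rule eventually_ge_at_top)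
  show ?thesis using ev1 ev2
  proof eventually_elim
    case (elim n)
    define y where "y = ln (real n)"
    have y: "y \<ge> M" using elim y_def by simp
    have y1: "y \<ge> 1" using y M1 by linarith
    have npos: "real n > 0" using elim by simp
    have ns: "real n ^ s = exp (real s * y)" using npos unfolding y_def
      by (simp add: exp_of_nat_mult)
    have k: "real ((aa n - s) div r) \<ge> (y^2 - real s) / real r - 1"
    proof -
      have "real ((aa n - s) div r) * real r + real r > real (aa n - s)"
      proof -
        have "(aa n - s) < (aa n - s) div r * r + r" using r
          by (metis add.commute div_mult_mod_eq mod_less_divisor nat_add_left_cancel_less not_one_le_zero not_gr_zero)
        then show ?thesis by (metis of_nat_add of_nat_less_iff of_nat_mult)
      qed
      moreover have "real (aa n - s) \<ge> real (aa n) - real s" by linarith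
      moreover have "real (aa n) \<ge> y^2" using aa_ge y_def by simp
      ultimately have "real ((aa n - s) div r) * real r \<ge> y^2 - real s - real r" by linarith
      then show ?thesis using r by (simp add: field_simps)
    qed
    have key: "q * y^2 / real r \<ge> (real s + 1) * y + q * real s / real r + q"
    proof -
      have k1: "q * y^2 / real r \<ge> q * y * M / real r"
        using y y1 q r unfolding power2_eq_square by (intro divide_right_mono) (auto simp: mult.assoc intro!: mult_left_mono)
      have k2: "q * y * M / real r = y * (real s + 1) + q * y * (real s + real r + 1) / real r"
        unfolding M_def using q r by (simp add: field_simps)
      have k3: "q * y * (real s + real r + 1) / real r \<ge> q * (real s + real r) / real r"
      proof -
        have "y * (real s + real r + 1) \<ge> 1 * (real s + real r + 1)" using y1 by (intro mult_right_mono) auto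
        then have "real s + real r \<le> y * (real s + real r + 1)" by (smt (verit))
        then have "q * (real s + real r) \<le> q * (y * (real s + real r + 1))" using q by (intro mult_left_mono) auto
        then show ?thesis using r by (intro divide_right_mono) (auto simp: mult.assoc)
      qed
      have k4: "q * (real s + real r) / real r = q * real s / real r + q" using r by (simp add: field_simps)
      show ?thesis using k1 k2 k3 k4 by (simp add: algebra_simps)
    qed
    have "real n ^ s * exp (- q * real ((aa n - s) div r)) \<le> exp (real s * y) * exp (- q * ((y^2 - real s) / real r - 1))"
      unfolding ns using k q by (intro mult_left_mono) auto
    also have "\<dots> = exp (real s * y - q * ((y^2 - real s) / real r - 1))" by (simp add: exp_add[symmetric])
    also have "\<dots> \<le> exp (- y)"
    proof -
      have "real s * y - q * ((y^2 - real s) / real r - 1) = real s * y - q * y^2 / real r + q * real s / real r + q"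
        using r by (simp add: field_simps)
      then have "real s * y - q * ((y^2 - real s) / real r - 1) \<le> - y" using key by (simp add: algebra_simps)
      then show ?thesis by simp
    qed
    also have "exp (- y) = 1 / real n" unfolding y_def using npos by (simp add: exp_minus inverse_eq_divide)
    finally show ?case .
  qed
qed


lemma ramsey_G:
  fixes G :: "'a set set"
  shows "finite X \<Longrightarrow> card X \<ge> (m + l) choose m \<Longrightarrow>
    (\<exists>W\<subseteq>X. card W = m \<and> (\<forall>u\<in>W. \<forall>v\<in>W. u \<noteq> v \<longrightarrow> {u, v} \<in> G)) \<or>
    (\<exists>S\<subseteq>X. card S = l \<and> (\<forall>u\<in>S. \<forall>v\<in>S. u \<noteq> v \<longrightarrow> {u, v} \<notin> G))"
proof (induction "m + l" arbitrary: m l X rule: less_induct)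
  case less
  show ?case
  proof (cases "m = 0 \<or> l = 0")
    case True
    then show ?thesis by (metis card.empty empty_iff empty_subsetI)
  next
    case False
    then obtain m' l' where ml: "m = Suc m'" "l = Suc l'" by (meson not0_implies_Suc)
    have pas: "(m + l) choose m = ((m' + l) choose m') + ((m + l') choose m)"
      using ml by (simp add: binomial_Suc_Suc)
    have "((m' + l) choose m') \<ge> 1" by (simp add: Suc_leI)
    then have "card X \<ge> 1" using less.prems pas by linarith
    then obtain v where v: "v \<in> X" using less.prems by fastforce
    define N where "N = {u\<in>X - {v}. {u, v} \<in> G}"
    define M where "M = {u\<in>X - {v}. {u, v} \<notin> G}"
    have fN: "finite N" "finite M" using less.prems unfolding N_def M_def by auto
    have NM: "N \<union> M = X - {v}" "N \<inter> M = {}" unfolding N_def M_def by auto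
    have "card N + card M = card X - 1"
      using card_Un_disjoint[OF fN NM(2)] NM(1) v less.prems by simp
    then have "card N \<ge> (m' + l) choose m' \<or> card M \<ge> (m + l') choose m"
      using less.prems pas by linarith
    then show ?thesis
    proof
      assume cN: "card N \<ge> (m' + l) choose m'"
      have "m' + l < m + l" using ml by simp
      from less.hyps[OF this fN(1) cN] show ?thesis
      proof
        assume "\<exists>W\<subseteq>N. card W = m' \<and> (\<forall>u\<in>W. \<forall>w\<in>W. u \<noteq> w \<longrightarrow> {u, w} \<in> G)"
        then obtain W where W: "W \<subseteq> N" "card W = m'" "\<forall>u\<in>W. \<forall>w\<in>W. u \<noteq> w \<longrightarrow> {u, w} \<in> G" by blast
        have vW: "v \<notin> W" using W N_def by blast
        have fW: "finite W" using W fN finite_subset by blast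
        have "insert v W \<subseteq> X" using W v N_def by blast
        moreover have "card (insert v W) = m" using vW fW W ml by simp
        moreover have "\<forall>u\<in>insert v W. \<forall>w\<in>insert v W. u \<noteq> w \<longrightarrow> {u, w} \<in> G"
          using W N_def by (auto simp: insert_commute)
        ultimately show ?thesis by blast
      next
        assume "\<exists>S\<subseteq>N. card S = l \<and> (\<forall>u\<in>S. \<forall>w\<in>S. u \<noteq> w \<longrightarrow> {u, w} \<notin> G)"
        then obtain S where S: "S \<subseteq> N" "card S = l" "\<forall>u\<in>S. \<forall>w\<in>S. u \<noteq> w \<longrightarrow> {u, w} \<notin> G" by blast
        have "S \<subseteq> X" using S(1) NM(1) by blast
        then show ?thesis using S by blast
      qed
    next
      assume cM: "card M \<ge> (m + l') choose m"
      have "m + l' < m + l" using ml by simp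
      from less.hyps[OF this fN(2) cM] show ?thesis
      proof
        assume "\<exists>W\<subseteq>M. card W = m \<and> (\<forall>u\<in>W. \<forall>w\<in>W. u \<noteq> w \<longrightarrow> {u, w} \<in> G)"
        then obtain W where S: "W \<subseteq> M" "card W = m" "\<forall>u\<in>W. \<forall>w\<in>W. u \<noteq> w \<longrightarrow> {u, w} \<in> G" by blast
        have "W \<subseteq> X" using S(1) NM(1) by blast
        then show ?thesis using S by blast
      next
        assume "\<exists>S\<subseteq>M. card S = l' \<and> (\<forall>u\<in>S. \<forall>w\<in>S. u \<noteq> w \<longrightarrow> {u, w} \<notin> G)"
        then obtain S where S: "S \<subseteq> M" "card S = l'" "\<forall>u\<in>S. \<forall>w\<in>S. u \<noteq> w \<longrightarrow> {u, w} \<notin> G" by blast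
        have vS: "v \<notin> S" using S M_def by blast
        have fS: "finite S" using S fN finite_subset by blast
        have "insert v S \<subseteq> X" using S v M_def by blast
        moreover have "card (insert v S) = l" using vS fS S ml by simp
        moreover have "\<forall>u\<in>insert v S. \<forall>w\<in>insert v S. u \<noteq> w \<longrightarrow> {u, w} \<notin> G"
          using S M_def by (auto simp: insert_commute)
        ultimately show ?thesis by blast
      qed
    qed
  qed
qed


definition ext_ok :: "nat set set \<Rightarrow> nat set \<Rightarrow> nat set \<Rightarrow> nat set set \<Rightarrow> nat set \<Rightarrow> (nat \<Rightarrow> nat) \<Rightarrow> bool" where
  "ext_ok G A VP EP S \<phi> \<longleftrightarrow> (\<exists>\<psi>. inj_on \<psi> VP \<and> (\<forall>v\<in>S. \<psi> v = \<phi> v) \<and> \<psi> ` (VP - S) \<subseteq> A - \<phi> ` S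
      \<and> (\<forall>e\<in>EP. \<not> e \<subseteq> S \<longrightarrow> \<psi> ` e \<in> G))"

definition EXT :: "nat \<Rightarrow> nat set set \<Rightarrow> nat set \<Rightarrow> nat set \<Rightarrow> nat set set \<Rightarrow> nat set \<Rightarrow> bool" where
  "EXT n G A VP EP S \<longleftrightarrow> (\<forall>\<phi>. inj_on \<phi> S \<longrightarrow> \<phi> ` S \<subseteq> {..<n} \<longrightarrow> ext_ok G A VP EP S \<phi>)"

lemma ext_ok_cong: "(\<forall>v\<in>S. \<phi> v = \<phi>' v) \<Longrightarrow> ext_ok G A VP EP S \<phi> = ext_ok G A VP EP S \<phi>'"
  unfolding ext_ok_def by (metis image_cong)

lemma gr_finite: "finite VP \<Longrightarrow> \<forall>e\<in>EP. \<exists>a b. a\<in>VP \<and> b\<in>VP \<and> a\<noteq>b \<and> e={a,b} \<Longrightarrow> finite EP"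
proof -
  assume f: "finite VP" and g: "\<forall>e\<in>EP. \<exists>a b. a\<in>VP \<and> b\<in>VP \<and> a\<noteq>b \<and> e={a,b}"
  have "EP \<subseteq> Pow VP"
  proof
    fix e assume e: "e \<in> EP"
    obtain a b where "a \<in> VP" "b \<in> VP" "e = {a, b}" using g[rule_format, OF e] by auto
    then show "e \<in> Pow VP" by simp
  qed
  then show ?thesis using finite_subset f by auto
qed

lemma ext_one:
  fixes VP S :: "nat set" and EP :: "nat set set" and \<phi> :: "nat \<Rightarrow> nat" and p :: real
  assumes fin: "finite VP" and gr: "\<forall>e\<in>EP. \<exists>a b. a\<in>VP \<and> b\<in>VP \<and> a\<noteq>b \<and> e={a,b}"
    and S: "S \<subseteq> VP" and rne: "VP - S \<noteq> {}"
    and inj: "inj_on \<phi> S" and \<phi>n: "\<phi> ` S \<subseteq> {..<n}" and an: "a \<le> n"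
    and p0: "0 \<le> p" and p1: "p \<le> 1"
  shows "pr p (all_edges n) (\<lambda>G. \<not> ext_ok G {..<a} VP EP S \<phi>)
          \<le> (1 - p ^ card EP) ^ ((a - card S) div card (VP - S))"
proof -
  define r where "r = card (VP - S)"
  have eVP: "e \<subseteq> VP" if e: "e \<in> EP" for e
  proof -
    obtain a b where "a \<in> VP" "b \<in> VP" "e = {a, b}" using gr[rule_format, OF e] by auto
    then show ?thesis by simp
  qed
  have r1: "r \<ge> 1" unfolding r_def using rne fin by (simp add: Suc_leI card_gt_0_iff)
  define A' where "A' = {..<a} - \<phi> ` S"
  have fS: "finite S" using S fin finite_subset by blast
  have cS: "card (\<phi> ` S) = card S" using inj card_image by blast
  have cA: "card A' \<ge> a - card S"
  proof -
    have "card A' \<ge> card {..<a} - card (\<phi> ` S)" unfolding A'_def by (rule diff_card_le_card_Diff) (use fS in simp)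
    then show ?thesis using cS by simp
  qed
  have fA: "finite A'" unfolding A'_def by simp
  obtain g where g: "bij_betw g {0..<card A'} A'" using ex_bij_betw_nat_finite[OF fA] by blast
  obtain h where h: "bij_betw h (VP - S) {0..<r}" using ex_bij_betw_finite_nat[of "VP - S"] fin unfolding r_def by blast
  define k where "k = card A' div r"
  define \<psi> where "\<psi> j v = (if v \<in> S then \<phi> v else g (j * r + h v))" for j v
  define T where "T j = (\<lambda>e. \<psi> j ` e) ` {e\<in>EP. \<not> e \<subseteq> S}" for j
  have F1: "j * r + h v < card A'" if "j < k" "v \<in> VP - S" for j v
  proof -
    have "h v < r" using h that bij_betwE by fastforce
    then have "j * r + h v < Suc j * r" by simp
    also have "Suc j * r \<le> k * r" using that by (intro mult_right_mono) auto
    also have "k * r \<le> card A'" unfolding k_def by simp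
    finally show ?thesis .
  qed
  have F2: "\<psi> j v \<in> A'" if "j < k" "v \<in> VP - S" for j v
    using F1[OF that] g that unfolding \<psi>_def by (auto dest: bij_betwE)
  have A'\<phi>: "A' \<inter> \<phi> ` S = {}" unfolding A'_def by blast
  have ginj: "inj_on g {0..<card A'}" using g bij_betw_imp_inj_on by blast
  have hinj: "inj_on h (VP - S)" using h bij_betw_imp_inj_on by blast
  have F3: "inj_on (\<psi> j) VP" if "j < k" for j
  proof (rule inj_onI)
    fix u v assume u: "u \<in> VP" and v: "v \<in> VP" and e: "\<psi> j u = \<psi> j v"
    show "u = v"
    proof (cases "u \<in> S"; cases "v \<in> S")
      assume "u \<in> S" "v \<in> S" then show ?thesis using e inj unfolding \<psi>_def by (auto dest: inj_onD)
    next
      assume "u \<in> S" "v \<notin> S"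
      then have "\<psi> j u \<in> \<phi> ` S" "\<psi> j v \<in> A'" using F2 that v unfolding \<psi>_def by auto
      then show ?thesis using e A'\<phi> by auto
    next
      assume "u \<notin> S" "v \<in> S"
      then have "\<psi> j v \<in> \<phi> ` S" "\<psi> j u \<in> A'" using F2 that u unfolding \<psi>_def by auto
      then show ?thesis using e A'\<phi> by auto
    next
      assume uS: "u \<notin> S" and vS: "v \<notin> S"
      then have "g (j * r + h u) = g (j * r + h v)" using e unfolding \<psi>_def by simp
      then have "j * r + h u = j * r + h v" using ginj F1[OF that] u v uS vS by (auto dest: inj_onD)
      then show ?thesis using hinj u v uS vS by (auto dest: inj_onD)
    qed
  qed
  have \<psi>n: "\<psi> j v < n" if "j < k" "v \<in> VP" for j v
  proof (cases "v \<in> S")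
    case True then show ?thesis using \<phi>n unfolding \<psi>_def by auto
  next
    case False
    then have "\<psi> j v \<in> A'" using F2 that by auto
    then show ?thesis unfolding A'_def using an by auto
  qed
  have F4: "T j \<subseteq> all_edges n" if "j < k" for j
  proof
    fix t assume "t \<in> T j"
    then obtain e where e: "e \<in> EP" "t = \<psi> j ` e" unfolding T_def by blast
    then obtain x y where xy: "x \<in> VP" "y \<in> VP" "x \<noteq> y" "e = {x, y}" using gr[rule_format, OF e(1)] by auto
    have "\<psi> j x \<noteq> \<psi> j y" using F3[OF that] xy by (auto dest: inj_onD)
    then show "t \<in> all_edges n" unfolding all_edges_def using e xy \<psi>n[OF that] by auto
  qed
  have F5: "T i \<inter> T j = {}" if "i < k" "j < k" "i \<noteq> j" for i j
  proof (rule ccontr)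
    assume "T i \<inter> T j \<noteq> {}"
    then obtain e e' where e: "e \<in> EP" "\<not> e \<subseteq> S" and e': "e' \<in> EP" "\<not> e' \<subseteq> S"
      and eq: "\<psi> i ` e = \<psi> j ` e'" unfolding T_def by blast
    obtain v where v: "v \<in> e" "v \<notin> S" using e by blast
    have vV: "v \<in> VP" using eVP[OF e(1)] v(1) by blast
    have "\<psi> i v \<in> \<psi> j ` e'" using eq v by blast
    then obtain v' where v': "v' \<in> e'" "\<psi> i v = \<psi> j v'" by blast
    have v'V: "v' \<in> VP" using eVP[OF e'(1)] v'(1) by blast
    have inA: "\<psi> i v \<in> A'" using F2 that vV v by auto
    show False
    proof (cases "v' \<in> S")
      case True
      then have "\<psi> j v' \<in> \<phi> ` S" unfolding \<psi>_def by simp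
      then show False using inA v' A'\<phi> by auto
    next
      case False
      then have "g (i * r + h v) = g (j * r + h v')" using v' v unfolding \<psi>_def by simp
      then have eq2: "i * r + h v = j * r + h v'" using ginj F1[OF that(1)] F1[OF that(2)] vV v v'V False
        by (auto dest: inj_onD)
      have "h v < r" "h v' < r" using h vV v v'V False bij_betwE by fastforce+
      then have "(i * r + h v) div r = i" "(j * r + h v') div r = j" using r1 by auto
      then show False using eq2 that by simp
    qed
  qed
  have F6: "ext_ok G {..<a} VP EP S \<phi>" if jk: "j < k" and TG: "\<forall>t\<in>T j. t \<in> G" for j G
    unfolding ext_ok_def
  proof (intro exI[of _ "\<psi> j"] conjI)
    show "inj_on (\<psi> j) VP" using F3 jk by blast
    show "\<forall>v\<in>S. \<psi> j v = \<phi> v" unfolding \<psi>_def by simp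
    show "\<psi> j ` (VP - S) \<subseteq> {..<a} - \<phi> ` S"
    proof
      fix t assume "t \<in> \<psi> j ` (VP - S)"
      then obtain v where v: "v \<in> VP - S" "t = \<psi> j v" by blast
      then show "t \<in> {..<a} - \<phi> ` S" using F2[OF jk v(1)] unfolding A'_def by simp
    qed
    show "\<forall>e\<in>EP. \<not> e \<subseteq> S \<longrightarrow> \<psi> j ` e \<in> G" using TG unfolding T_def by blast
  qed
  have finE: "finite (all_edges n)"
  proof -
    have "all_edges n \<subseteq> Pow {..<n}" unfolding all_edges_def by auto
    then show ?thesis using finite_subset by blast
  qed
  have fEP: "finite EP" using gr_finite fin gr by blast
  have "pr p (all_edges n) (\<lambda>G. \<not> ext_ok G {..<a} VP EP S \<phi>) \<le> pr p (all_edges n) (\<lambda>G. \<forall>j<k. \<not> T j \<subseteq> G)"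
    using F6 p0 p1 by (intro pr_mono finE) blast+
  also have "\<dots> = (\<Prod>j<k. 1 - p ^ card (T j))"
    using F4 F5 finE by (intro pr_blocks) auto
  also have "\<dots> \<le> (\<Prod>j<k. 1 - p ^ card EP)"
  proof (rule prod_mono)
    fix j assume "j \<in> {..<k}"
    have "card (T j) \<le> card EP"
    proof -
      have "card (T j) \<le> card {e\<in>EP. \<not> e \<subseteq> S}" unfolding T_def by (rule card_image_le) (use fEP in simp)
      also have "\<dots> \<le> card EP" using fEP by (intro card_mono) auto
      finally show ?thesis .
    qed
    then have "p ^ card EP \<le> p ^ card (T j)" using p0 p1 by (intro power_decreasing) auto
    moreover have "p ^ card (T j) \<le> 1" using p0 p1 by (simp add: power_le_one)
    ultimately show "0 \<le> 1 - p ^ card (T j) \<and> 1 - p ^ card (T j) \<le> 1 - p ^ card EP" by simp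
  qed
  also have "\<dots> = (1 - p ^ card EP) ^ k" by simp
  also have "\<dots> \<le> (1 - p ^ card EP) ^ ((a - card S) div r)"
  proof (rule power_decreasing)
    show "(a - card S) div r \<le> k" unfolding k_def using cA by (intro div_le_mono)
    show "0 \<le> 1 - p ^ card EP" using p0 p1 by (simp add: power_le_one)
    show "1 - p ^ card EP \<le> 1" using p0 by simp
  qed
  finally show ?thesis unfolding r_def .
qed


lemma finite_all_edges: "finite (all_edges n)"
proof -
  have "all_edges n \<subseteq> Pow {..<n}" unfolding all_edges_def by auto
  then show ?thesis using finite_subset by blast
qed

lemma ext_all:
  fixes VP S :: "nat set" and EP :: "nat set set" and p :: real
  assumes fin: "finite VP" and gr: "\<forall>e\<in>EP. \<exists>a b. a\<in>VP \<and> b\<in>VP \<and> a\<noteq>b \<and> e={a,b}"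
    and S: "S \<subseteq> VP" and rne: "VP - S \<noteq> {}" and an: "a \<le> n"
    and p0: "0 \<le> p" and p1: "p \<le> 1"
  shows "pr p (all_edges n) (\<lambda>G. \<not> EXT n G {..<a} VP EP S)
          \<le> real n ^ card S * (1 - p ^ card EP) ^ ((a - card S) div card (VP - S))"
proof -
  define \<Phi> where "\<Phi> = {\<phi> \<in> S \<rightarrow>\<^sub>E {..<n}. inj_on \<phi> S}"
  have fS: "finite S" using S fin finite_subset by blast
  have f\<Phi>: "finite \<Phi>"
  proof (rule finite_subset)
    show "\<Phi> \<subseteq> S \<rightarrow>\<^sub>E {..<n}" unfolding \<Phi>_def by blast
    show "finite (S \<rightarrow>\<^sub>E {..<n})" using fS by (intro finite_PiE) auto
  qed
  have c\<Phi>: "card \<Phi> \<le> n ^ card S"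
  proof -
    have "card \<Phi> \<le> card (S \<rightarrow>\<^sub>E {..<n})" unfolding \<Phi>_def using fS by (intro card_mono finite_PiE) auto
    also have "\<dots> = n ^ card S" using fS by (simp add: card_PiE)
    finally show ?thesis .
  qed
  define B where "B = (1 - p ^ card EP) ^ ((a - card S) div card (VP - S))"
  have "pr p (all_edges n) (\<lambda>G. \<not> EXT n G {..<a} VP EP S) \<le> pr p (all_edges n) (\<lambda>G. \<exists>\<phi>\<in>\<Phi>. \<not> ext_ok G {..<a} VP EP S \<phi>)"
  proof (rule pr_mono[OF p0 p1 finite_all_edges])
    fix G assume "\<not> EXT n G {..<a} VP EP S"
    then obtain \<phi> where \<phi>: "inj_on \<phi> S" "\<phi> ` S \<subseteq> {..<n}" "\<not> ext_ok G {..<a} VP EP S \<phi>" unfolding EXT_def by blast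
    have "restrict \<phi> S \<in> \<Phi>" unfolding \<Phi>_def using \<phi> by (auto simp: inj_on_def)
    moreover have "\<not> ext_ok G {..<a} VP EP S (restrict \<phi> S)" using \<phi>(3) ext_ok_cong[of S \<phi> "restrict \<phi> S"] by simp
    ultimately show "\<exists>\<phi>\<in>\<Phi>. \<not> ext_ok G {..<a} VP EP S \<phi>" by blast
  qed
  also have "\<dots> \<le> (\<Sum>\<phi>\<in>\<Phi>. pr p (all_edges n) (\<lambda>G. \<not> ext_ok G {..<a} VP EP S \<phi>))"
    by (rule pr_union[OF p0 p1 finite_all_edges f\<Phi>])
  also have "\<dots> \<le> (\<Sum>\<phi>\<in>\<Phi>. B)"
  proof (rule sum_mono)
    fix \<phi> assume "\<phi> \<in> \<Phi>"
    then have "inj_on \<phi> S" "\<phi> ` S \<subseteq> {..<n}" unfolding \<Phi>_def by auto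
    then show "pr p (all_edges n) (\<lambda>G. \<not> ext_ok G {..<a} VP EP S \<phi>) \<le> B"
      unfolding B_def using ext_one[OF fin gr S rne _ _ an p0 p1] by blast
  qed
  also have "\<dots> = real (card \<Phi>) * B" by simp
  also have "\<dots> \<le> real n ^ card S * B"
  proof (rule mult_right_mono)
    show "real (card \<Phi>) \<le> real n ^ card S" using c\<Phi> by (metis of_nat_le_iff of_nat_power)
    show "0 \<le> B" unfolding B_def using p0 p1 by (simp add: power_le_one)
  qed
  finally show ?thesis unfolding B_def .
qed

lemma ln_sq_le: "x \<ge> 289 \<Longrightarrow> ln x ^ 2 + 1 \<le> (x::real)"
proof -
  assume x: "x \<ge> 289"
  have xp: "x > 0" using x by simp
  have "ln (x powr (1/4)) \<le> x powr (1/4) - 1" using xp by (intro ln_le_minus_one) simp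
  then have l: "ln x \<le> 4 * x powr (1/4)" using xp by (simp add: ln_powr)
  have l0: "ln x \<ge> 0" using x by simp
  have "ln x ^ 2 \<le> (4 * x powr (1/4))^2" using l l0 by (intro power_mono) auto
  also have "\<dots> = 16 * (x powr (1/4))^2" by (simp add: power_mult_distrib)
  also have "(x powr (1/4))^2 = x powr (1/2)" using xp by (simp add: power2_eq_square powr_add[symmetric])
  also have "x powr (1/2) = sqrt x" using xp by (simp add: powr_half_sqrt)
  finally have a: "ln x ^ 2 \<le> 16 * sqrt x" by simp
  have s17: "sqrt x \<ge> 17" using x real_sqrt_le_mono[of 289 x] by simp
  have "x = sqrt x * sqrt x" using xp by simp
  also have "\<dots> \<ge> 17 * sqrt x" using s17 xp by (intro mult_right_mono) auto
  finally show ?thesis using a s17 by linarith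
qed

lemma aa_le_n: "eventually (\<lambda>n. aa n \<le> n) sequentially"
proof -
  have "eventually (\<lambda>n. n \<ge> (289::nat)) sequentially" by (rule eventually_ge_at_top)
  then show ?thesis
  proof eventually_elim
    case (elim n)
    then have "ln (real n) ^ 2 + 1 \<le> real n" by (intro ln_sq_le) simp
    then have "real (aa n) \<le> real n" using aa_le[of n] by linarith
    then show ?case by simp
  qed
qed

lemma EXT_whp:
  fixes VP S :: "nat set" and EP :: "nat set set" and p :: real
  assumes fin: "finite VP" and gr: "\<forall>e\<in>EP. \<exists>a b. a\<in>VP \<and> b\<in>VP \<and> a\<noteq>b \<and> e={a,b}"
    and S: "S \<subseteq> VP" and p0: "0 < p" and p1: "p \<le> 1"
  shows "(\<lambda>n. pr p (all_edges n) (\<lambda>G. \<not> EXT n G {..<aa n} VP EP S)) \<longlonglongrightarrow> 0"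
proof (cases "VP - S = {}")
  case True
  have "EXT n G A VP EP S" for n G A
    unfolding EXT_def ext_ok_def
  proof (intro allI impI)
    fix \<phi> :: "nat \<Rightarrow> nat" assume "inj_on \<phi> S"
    then show "\<exists>\<psi>. inj_on \<psi> VP \<and> (\<forall>v\<in>S. \<psi> v = \<phi> v) \<and> \<psi> ` (VP - S) \<subseteq> A - \<phi> ` S \<and> (\<forall>e\<in>EP. \<not> e \<subseteq> S \<longrightarrow> \<psi> ` e \<in> G)"
      using True S gr by (intro exI[of _ \<phi>]) auto
  qed
  then have "pr p (all_edges n) (\<lambda>G. \<not> EXT n G {..<aa n} VP EP S) = 0" for n
    unfolding pr_def by simp
  then show ?thesis by simp
next
  case False
  define q where "q = p ^ card EP"
  have q0: "q > 0" unfolding q_def using p0 by simp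
  have q1: "q \<le> 1" unfolding q_def using p0 p1 by (simp add: power_le_one)
  define r where "r = card (VP - S)"
  have r1: "r \<ge> 1" unfolding r_def using False fin by (simp add: Suc_leI card_gt_0_iff)
  have ev: "eventually (\<lambda>n. pr p (all_edges n) (\<lambda>G. \<not> EXT n G {..<aa n} VP EP S) \<le> 1 / real n) sequentially"
    using aa_le_n ext_bound_ev[OF r1 q0, of "card S"]
  proof eventually_elim
    case (elim n)
    have "pr p (all_edges n) (\<lambda>G. \<not> EXT n G {..<aa n} VP EP S)
          \<le> real n ^ card S * (1 - q) ^ ((aa n - card S) div r)"
      unfolding q_def r_def using ext_all[OF fin gr S False elim(1)] p0 p1 by simp
    also have "\<dots> \<le> real n ^ card S * exp (- q * real ((aa n - card S) div r))"
    proof (rule mult_left_mono)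
      have "(1 - q) ^ ((aa n - card S) div r) \<le> exp (- q) ^ ((aa n - card S) div r)"
        using q1 by (intro power_mono) (auto simp: exp_ge_add_one_self[of "-q", simplified])
      also have "\<dots> = exp (- q * real ((aa n - card S) div r))" by (simp add: exp_of_nat_mult[symmetric] mult.commute)
      finally show "(1 - q) ^ ((aa n - card S) div r) \<le> exp (- q * real ((aa n - card S) div r))" .
    qed simp
    also have "\<dots> \<le> 1 / real n" using elim(2) .
    finally show ?case .
  qed
  have lim: "(\<lambda>n. 1 / real n) \<longlonglongrightarrow> (0::real)" by (rule lim_const_over_n)
  show ?thesis
  proof (rule tendsto_sandwich[OF _ ev tendsto_const lim])
    show "eventually (\<lambda>n. 0 \<le> pr p (all_edges n) (\<lambda>G. \<not> EXT n G {..<aa n} VP EP S)) sequentially"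
      by (intro always_eventually allI pr_nonneg) (use p0 p1 in auto)
  qed
qed


definition EU :: "nat set set \<Rightarrow> nat set \<Rightarrow> nat set set" where
  "EU G U = {e \<in> G. e \<subseteq> U}"

definition star :: "nat set set \<Rightarrow> nat \<Rightarrow> nat set \<Rightarrow> nat set set" where
  "star G w A = {e \<in> G. \<exists>z\<in>A. e = {w, z}}"

lemma copy_intro:
  "inj_on \<psi> VF \<Longrightarrow> \<psi> ` VF \<subseteq> {..<n} \<Longrightarrow> (\<forall>e\<in>EF. \<psi> ` e \<in> G) \<Longrightarrow>
   (\<lambda>e. \<psi> ` e) ` EF \<in> copies n VF EF G"
  unfolding copies_def by blast

locale ws =
  fixes n :: nat and G :: "nat set set" and VF :: "nat set" and EF :: "nat set set" and I :: "nat set set set"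
  assumes WS: "weakly_sat_matroid n G VF EF I"
    and Gsub: "G \<subseteq> all_edges n"
    and gF: "is_graph VF EF"
begin

abbreviation r where "r \<equiv> mrank I"

lemma M: "matroid G I" using WS unfolding weakly_sat_matroid_def by blast

lemma finG: "finite G" using m_finE[OF M] .

lemma copy_sub: "C \<in> copies n VF EF G \<Longrightarrow> C \<subseteq> G"
  unfolding copies_def by blast

lemma copy_cyc: "C \<in> copies n VF EF G \<Longrightarrow> e \<in> C \<Longrightarrow> r (C - {e}) = r C"
  using WS unfolding weakly_sat_matroid_def by blast

definition sp :: "nat set set \<Rightarrow> nat set \<Rightarrow> bool" where
  "sp X e \<longleftrightarrow> r (insert e X) = r X"

lemma sp_mem: "e \<in> X \<Longrightarrow> sp X e" unfolding sp_def by (simp add: insert_absorb)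

lemma copy_span:
  assumes X: "X \<subseteq> G" and C: "C \<in> copies n VF EF G" and e: "e \<in> C"
    and rest: "\<forall>c\<in>C - {e}. sp X c"
  shows "sp X e"
  unfolding sp_def
  by (rule span_cycle[OF M copy_sub[OF C] X e copy_cyc[OF C e]]) (use rest in \<open>auto simp: sp_def\<close>)

lemma span_all:
  assumes X: "X \<subseteq> G" and Y: "Y \<subseteq> G" and sY: "\<forall>y\<in>Y. sp X y"
  shows "r (X \<union> Y) = r X"
proof (rule span_set[OF M _ X Y])
  show "finite Y" using Y finG finite_subset by blast
  show "\<forall>z\<in>Y. r (insert z X) = r X" using sY unfolding sp_def by blast
qed

lemma EU_sub: "EU G U \<subseteq> G" unfolding EU_def by blast
lemma star_sub: "star G w A \<subseteq> G" unfolding star_def by blast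

lemma edge_form: "e \<in> G \<Longrightarrow> \<exists>a b. a < n \<and> b < n \<and> a \<noteq> b \<and> e = {a, b}"
  using Gsub unfolding all_edges_def by blast

lemma graphF: "e \<in> EF \<Longrightarrow> \<exists>a b. a \<in> VF \<and> b \<in> VF \<and> a \<noteq> b \<and> e = {a, b}"
  using gF unfolding is_graph_def by blast

lemma finVF: "finite VF" using gF unfolding is_graph_def by blast

lemma lower_span:
  assumes xy: "{x, y} \<in> EF" and xy2: "x \<noteq> y"
    and ext: "EXT n G A VF EF {x, y}"
    and AU: "A \<subseteq> U" and Un: "U \<subseteq> {..<n}" and w: "w \<in> U - A"
  shows "r (EU G U) = r (EU G (U - {w}) \<union> star G w A)"
proof -
  let ?X = "EU G (U - {w}) \<union> star G w A"
  have Xs: "?X \<subseteq> G" using EU_sub star_sub by blast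
  have XU: "?X \<subseteq> EU G U" unfolding EU_def star_def using AU w by auto
  have sp_all: "\<forall>e\<in>EU G U. sp ?X e"
  proof
    fix e assume eU: "e \<in> EU G U"
    then have eG: "e \<in> G" and eUU: "e \<subseteq> U" unfolding EU_def by auto
    obtain a b where ab: "a \<noteq> b" "e = {a, b}" using edge_form[OF eG] by blast
    show "sp ?X e"
    proof (cases "w \<in> e")
      case False
      then have "e \<in> ?X" using eG eUU unfolding EU_def by blast
      then show ?thesis by (rule sp_mem)
    next
      case True
      then obtain z where z: "e = {w, z}" "z \<noteq> w" using ab by auto
      have zU: "z \<in> U" using z eUU by blast
      show ?thesis
      proof (cases "z \<in> A")
        case True
        then have "e \<in> ?X" using eG z unfolding star_def by blast
        then show ?thesis by (rule sp_mem)
      next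
        case zA: False
        define \<phi> where "\<phi> v = (if v = x then w else z)" for v
        have "inj_on \<phi> {x, y}" unfolding \<phi>_def using xy2 z by (auto simp: inj_on_def)
        moreover have "\<phi> ` {x, y} \<subseteq> {..<n}" unfolding \<phi>_def using zU w Un by auto
        ultimately have "ext_ok G A VF EF {x, y} \<phi>" using ext unfolding EXT_def by blast
        then obtain \<psi> where \<psi>: "inj_on \<psi> VF" "\<forall>v\<in>{x, y}. \<psi> v = \<phi> v"
          "\<psi> ` (VF - {x, y}) \<subseteq> A - \<phi> ` {x, y}" "\<forall>e\<in>EF. \<not> e \<subseteq> {x, y} \<longrightarrow> \<psi> ` e \<in> G"
          unfolding ext_ok_def by blast
        have \<psi>x: "\<psi> x = w" and \<psi>y: "\<psi> y = z" using \<psi>(2) xy2 unfolding \<phi>_def by auto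
        have xyV: "x \<in> VF" "y \<in> VF" using graphF[OF xy] by (auto simp: doubleton_eq_iff)
        have \<psi>V: "\<psi> v \<in> insert w (insert z A)" if "v \<in> VF" for v
          using \<psi>(3) that \<psi>x \<psi>y by (cases "v = x \<or> v = y") auto
        have allG: "\<forall>f\<in>EF. \<psi> ` f \<in> G"
        proof
          fix f assume f: "f \<in> EF"
          show "\<psi> ` f \<in> G"
          proof (cases "f \<subseteq> {x, y}")
            case True
            obtain c d where cd: "c \<in> VF" "d \<in> VF" "c \<noteq> d" "f = {c, d}" using graphF[OF f] by blast
            then have "f = {x, y}" using True xy2 by auto
            then show ?thesis using \<psi>x \<psi>y eG z by simp
          qed (use \<psi>(4) f in blast)
        qed
        have \<psi>n: "\<psi> ` VF \<subseteq> {..<n}" using \<psi>V w zU Un AU by blast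
        let ?C = "(\<lambda>f. \<psi> ` f) ` EF"
        have C: "?C \<in> copies n VF EF G" by (rule copy_intro[OF \<psi>(1) \<psi>n allG])
        have "\<psi> ` {x, y} = e" using z \<psi>x \<psi>y by simp
        then have eC: "e \<in> ?C" using xy by (metis imageI)
        have "\<forall>c\<in>?C - {e}. sp ?X c"
        proof
          fix c assume c: "c \<in> ?C - {e}"
          then obtain f where f: "f \<in> EF" "c = \<psi> ` f" by blast
          obtain a' b' where ab': "a' \<in> VF" "b' \<in> VF" "a' \<noteq> b'" "f = {a', b'}" using graphF[OF f(1)] by blast
          have cG: "c \<in> G" using allG f by blast
          have "c \<in> ?X"
          proof (cases "w \<in> c")
            case True
            then have "\<psi> a' = w \<or> \<psi> b' = w" using f ab' by auto
            then have "a' = x \<or> b' = x" using \<psi>x \<psi>(1) ab' xyV by (auto dest: inj_onD)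
            then have "\<exists>o'. o' \<in> VF \<and> c = {w, \<psi> o'} \<and> o' \<noteq> x"
            proof
              assume "a' = x" then show ?thesis using f ab' \<psi>x by (intro exI[of _ b']) auto
            next
              assume "b' = x" then show ?thesis using f ab' \<psi>x by (intro exI[of _ a']) auto
            qed
            then obtain o' where o': "o' \<in> VF" "c = {w, \<psi> o'}" "o' \<noteq> x" by blast
            have "\<psi> o' \<noteq> w" using o' \<psi>x \<psi>(1) xyV by (auto dest: inj_onD)
            moreover have "\<psi> o' \<noteq> z" using o' c eC z by auto
            ultimately have "\<psi> o' \<in> A" using \<psi>V[OF o'(1)] by blast
            then show ?thesis using cG o' unfolding star_def by blast
          next
            case False
            have "c \<subseteq> insert z A" using f ab' \<psi>V False by auto
            then have "c \<subseteq> U - {w}" using zU AU w z by blast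
            then show ?thesis using cG unfolding EU_def by blast
          qed
          then show "sp ?X c" by (rule sp_mem)
        qed
        then show ?thesis using copy_span[OF Xs C eC] by blast
      qed
    qed
  qed
  have "r (?X \<union> EU G U) = r ?X" by (rule span_all[OF Xs EU_sub sp_all])
  moreover have "?X \<union> EU G U = EU G U" using XU by blast
  ultimately show ?thesis by simp
qed

lemma lower_sum:
  assumes xy: "{x, y} \<in> EF" and xy2: "x \<noteq> y"
    and ext: "EXT n G A VF EF {x, y}"
    and AU: "A \<subseteq> U" and Un: "U \<subseteq> {..<n}"
    and W: "W \<subseteq> U - A" and fW: "finite W"
  shows "r (EU G (U - W)) + (\<Sum>w\<in>W. r (EU G U) - r (EU G (U - {w}))) \<le> r (EU G U)"
  using fW W
proof (induction W rule: finite_induct)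
  case empty then show ?case by simp
next
  case (insert w W)
  let ?U' = "U - W"
  have AU': "A \<subseteq> ?U'" using AU insert.prems by blast
  have wU': "w \<in> ?U' - A" using insert by blast
  have U'n: "?U' \<subseteq> {..<n}" using Un by blast
  have eq1: "r (EU G U) = r (EU G (U - {w}) \<union> star G w A)"
    using lower_span[OF xy xy2 ext AU Un] insert.prems by blast
  have sm: "r ((EU G (U - {w}) \<union> star G w A)) + r (EU G (?U' - {w}))
       \<le> r (EU G (U - {w})) + r (EU G (?U' - {w}) \<union> star G w A)"
  proof -
    have "r ((EU G (U - {w})) \<union> (EU G (?U' - {w}) \<union> star G w A)) + r ((EU G (U - {w})) \<inter> (EU G (?U' - {w}) \<union> star G w A))
         \<le> r (EU G (U - {w})) + r (EU G (?U' - {w}) \<union> star G w A)"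
      using r_submod[OF M, of "EU G (U - {w})" "EU G (?U' - {w}) \<union> star G w A"] EU_sub star_sub by simp
    moreover have eqq: "(EU G (U - {w})) \<union> (EU G (?U' - {w}) \<union> star G w A) = EU G (U - {w}) \<union> star G w A"
      unfolding EU_def by blast
    ultimately have "r (EU G (U - {w}) \<union> star G w A) + r ((EU G (U - {w})) \<inter> (EU G (?U' - {w}) \<union> star G w A))
         \<le> r (EU G (U - {w})) + r (EU G (?U' - {w}) \<union> star G w A)" by simp
    moreover have "r (EU G (?U' - {w})) \<le> r ((EU G (U - {w})) \<inter> (EU G (?U' - {w}) \<union> star G w A))"
      by (rule r_mono[OF M]) (auto simp: EU_def)
    ultimately show ?thesis by linarith
  qed
  have le2: "r (EU G (?U' - {w}) \<union> star G w A) \<le> r (EU G ?U')"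
    by (rule r_mono[OF M]) (use AU' wU' in \<open>auto simp: EU_def star_def\<close>)
  have IH: "r (EU G (U - W)) + (\<Sum>w\<in>W. r (EU G U) - r (EU G (U - {w}))) \<le> r (EU G U)"
    using insert by blast
  have mono1: "r (EU G (U - {w})) \<le> r (EU G U)" by (rule r_mono[OF M]) (auto simp: EU_def)
  have eqU: "U - insert w W = ?U' - {w}" by blast
  have "r (EU G (U - insert w W)) + (r (EU G U) - r (EU G (U - {w}))) \<le> r (EU G ?U')"
    unfolding eqU using sm le2 eq1 mono1 by linarith
  then show ?case using IH insert.hyps by simp
qed

end


context ws
begin

lemma upper:
  fixes x y m s b :: nat and W Z U A :: "nat set" and \<beta> :: "nat \<Rightarrow> nat" and H :: "nat set set"
  assumes xy: "{x, y} \<in> EF" and xy2: "x \<noteq> y"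
    and ext3: "EXT n G A VF EF (insert x {v. {x, v} \<in> EF})"
    and ext4: "EXT n G A (VF \<union> {b..<b+s}) (EF \<union> {{z, v} | z v. z \<in> {b..<b+s} \<and> v \<in> {v. {x, v} \<in> EF} - {y}})
                 ({x, y} \<union> {b..<b+s})"
    and bVF: "\<forall>v\<in>VF. v < b" and sVF: "card VF \<le> s"
    and AU: "A \<subseteq> U" and Un: "U \<subseteq> {..<n}" and W: "W \<subseteq> U - A"
    and \<beta>inj: "inj_on \<beta> {..<m+s}" and \<beta>W: "\<beta> ` {..<m} = W" and \<beta>Z: "\<beta> ` {m..<m+s} = Z" and ZA: "Z \<subseteq> A"
    and K: "\<forall>i<m+s. \<forall>j<m+s. i \<noteq> j \<longrightarrow> {\<beta> i, \<beta> j} \<in> G"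
    and Hp: "wsat_process (m+s) (all_edges (m+s)) VF EF H"
  shows "r (EU G U) \<le> r (EU G (U - W)) + card H"
proof -
  let ?bE = "\<lambda>e. \<beta> ` e"
  let ?X = "EU G (U - W) \<union> ?bE ` H"
  have Hsub: "H \<subseteq> all_edges (m+s)" using Hp unfolding wsat_process_def by blast
  have bE_G: "?bE e \<in> G" if ein: "e \<in> all_edges (m+s)" for e
  proof -
    obtain i j where "i < m+s" "j < m+s" "i \<noteq> j" "e = {i, j}" using ein unfolding all_edges_def by blast
    then show ?thesis using K by auto
  qed
  have Xs: "?X \<subseteq> G" using EU_sub bE_G Hsub by blast
  have WZ: "W \<inter> Z = {}" using W ZA by blast
  have ZU: "Z \<subseteq> U - W" using ZA AU WZ by blast
  have Wn: "W \<subseteq> {..<n}" using W Un by blast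
  have K_UN: "\<beta> ` {..<m+s} = W \<union> Z"
  proof -
    have "{..<m+s} = {..<m} \<union> {m..<m+s}" by auto
    then have "\<beta> ` {..<m+s} = \<beta> ` {..<m} \<union> \<beta> ` {m..<m+s}" by (simp add: image_Un)
    then show ?thesis using \<beta>W \<beta>Z by simp
  qed
  have spa: "sp ?X (?bE e)" if e: "e \<in> all_edges (m+s)" for e
  proof -
    obtain es where es: "distinct es" "set es = all_edges (m+s) - H"
      "\<forall>i<length es. \<exists>C\<in>copies (m+s) VF EF (H \<union> set (take (Suc i) es)). es ! i \<in> C"
      using Hp unfolding wsat_process_def by blast
    have step: "sp ?X (?bE (es ! i))" if "i < length es" for i
      using that
    proof (induction i rule: less_induct)
      case (less i)
      obtain C where C: "C \<in> copies (m+s) VF EF (H \<union> set (take (Suc i) es))" "es ! i \<in> C"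
        using es(3) less.prems by blast
      obtain f where f: "inj_on f VF" "f ` VF \<subseteq> {..<m+s}" "C = (\<lambda>e. f ` e) ` EF"
        "(\<lambda>e. f ` e) ` EF \<subseteq> H \<union> set (take (Suc i) es)"
        using C(1) unfolding copies_def by blast
      have setes: "set es \<subseteq> all_edges (m+s)" using es by blast
      have take_sub: "set (take (Suc i) es) \<subseteq> all_edges (m+s)" using subset_trans[OF set_take_subset setes] .
      have Csub: "C \<subseteq> all_edges (m+s)"
      proof -
        have "C \<subseteq> H \<union> set (take (Suc i) es)" using f(3,4) by simp
        then show ?thesis using Hsub take_sub by blast
      qed
      have copy: "?bE ` C \<in> copies n VF EF G"
      proof -
        have "inj_on (\<beta> \<circ> f) VF" using f \<beta>inj by (auto intro: comp_inj_on inj_on_subset)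
        moreover have "(\<beta> \<circ> f) ` VF \<subseteq> {..<n}"
        proof -
          have a: "(\<beta> \<circ> f) ` VF \<subseteq> \<beta> ` {..<m+s}" using f by auto
          have b: "\<beta> ` {..<m+s} \<subseteq> {..<n}" using K_UN Wn ZA AU Un by blast
          show ?thesis using subset_trans[OF a b] .
        qed
        moreover have "\<forall>e\<in>EF. (\<beta> \<circ> f) ` e \<in> G"
        proof
          fix e assume "e \<in> EF"
          then have "f ` e \<in> C" using f by blast
          then have "?bE (f ` e) \<in> G" using bE_G Csub by blast
          then show "(\<beta> \<circ> f) ` e \<in> G" by (simp add: image_comp)
        qed
        ultimately have "(\<lambda>e. (\<beta> \<circ> f) ` e) ` EF \<in> copies n VF EF G" by (rule copy_intro)
        moreover have "(\<lambda>e. (\<beta> \<circ> f) ` e) ` EF = ?bE ` C" using f(3) by (auto simp: image_comp)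
        ultimately show ?thesis by simp
      qed
      have inC: "?bE (es ! i) \<in> ?bE ` C" using C by blast
      have binj: "inj_on ?bE (all_edges (m+s))"
      proof (rule inj_onI)
        fix e1 e2 assume "e1 \<in> all_edges (m+s)" "e2 \<in> all_edges (m+s)" "\<beta> ` e1 = \<beta> ` e2"
        moreover have "e1 \<subseteq> {..<m+s}" "e2 \<subseteq> {..<m+s}" using calculation unfolding all_edges_def by auto
        ultimately show "e1 = e2" using \<beta>inj by (metis inj_on_image_eq_iff)
      qed
      have "\<forall>c\<in>?bE ` C - {?bE (es ! i)}. sp ?X c"
      proof
        fix c assume c: "c \<in> ?bE ` C - {?bE (es ! i)}"
        then obtain d where d: "d \<in> C" "c = ?bE d" by blast
        have dne: "d \<noteq> es ! i" using c d by blast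
        have "d \<in> H \<union> set (take (Suc i) es)" using d f by blast
        moreover have "set (take (Suc i) es) = insert (es ! i) (set (take i es))"
          using less.prems by (simp add: take_Suc_conv_app_nth)
        ultimately have "d \<in> H \<or> d \<in> set (take i es)" using dne by blast
        then show "sp ?X c"
        proof
          assume dH: "d \<in> H"
          have "c \<in> ?X" using d(2) dH by (intro UnI2 image_eqI[of _ _ d]) auto
          then show ?thesis by (rule sp_mem)
        next
          assume "d \<in> set (take i es)"
          then obtain j where j: "j < i" "d = es ! j" using less.prems by (auto simp: in_set_conv_nth)
          then show ?thesis using less.IH[of j] less.prems d by simp
        qed
      qed
      then show ?case using copy_span[OF Xs copy inC] by blast
    qed
    show ?thesis
    proof (cases "e \<in> H")
      case True
      then have "?bE e \<in> ?X" by (intro UnI2 imageI)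
      then show ?thesis by (rule sp_mem)
    next
      case False
      then have "e \<in> set es" using es e by blast
      then obtain i where "i < length es" "e = es ! i" by (auto simp: in_set_conv_nth)
      then show ?thesis using step by blast
    qed
  qed
  have spK: "sp ?X {q1, q2}" if q: "q1 \<in> W \<union> Z" "q2 \<in> W \<union> Z" "q1 \<noteq> q2" for q1 q2
  proof -
    obtain i j where ij: "i < m+s" "j < m+s" "q1 = \<beta> i" "q2 = \<beta> j" using q K_UN by (metis imageE lessThan_iff)
    then have "i \<noteq> j" using q by blast
    then have "{i, j} \<in> all_edges (m+s)" using ij unfolding all_edges_def by blast
    from spa[OF this] show ?thesis using ij by simp
  qed
  have Kedge: "{q1, q2} \<in> G" if q: "q1 \<in> W \<union> Z" "q2 \<in> W \<union> Z" "q1 \<noteq> q2" for q1 q2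
  proof -
    obtain i j where ij: "i < m+s" "j < m+s" "q1 = \<beta> i" "q2 = \<beta> j" using q K_UN by (metis imageE lessThan_iff)
    then have "i \<noteq> j" using q by blast
    then show ?thesis using K ij by blast
  qed
  define NF where "NF = {v. {x, v} \<in> EF}"
  have xV: "x \<in> VF" and yV: "y \<in> VF" using graphF[OF xy] by (auto simp: doubleton_eq_iff)
  have NFV: "NF \<subseteq> VF" unfolding NF_def using graphF by (fastforce simp: doubleton_eq_iff)
  have xNF: "x \<notin> NF" unfolding NF_def using graphF by (fastforce simp: doubleton_eq_iff)
  have yNF: "y \<in> NF" unfolding NF_def using xy by simp
  obtain \<iota> where \<iota>: "bij_betw \<iota> VF {0..<card VF}" using ex_bij_betw_finite_nat[OF finVF] by blast
  have \<iota>lt: "\<iota> v < s" if "v \<in> VF" for v using \<iota> that sVF bij_betwE by fastforce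
  have \<iota>inj: "inj_on \<iota> VF" using \<iota> bij_betw_imp_inj_on by blast
  have \<beta>Zin: "\<beta> (m + j) \<in> Z" if "j < s" for j using \<beta>Z that by force
  have \<beta>Win: "\<beta> j \<in> W" if "j < m" for j using \<beta>W that by force
  have WA: "W \<inter> A = {}" using W by blast
  have spb1: "sp ?X {w, u}" if w: "w \<in> W" and u: "u \<in> A - Z" and wu: "{w, u} \<in> G"
    and uZ: "\<forall>z\<in>Z. {u, z} \<in> G" for w u
  proof -
    define \<phi> where "\<phi> v = (if v = x then w else if v = y then u else \<beta> (m + \<iota> v))" for v
    have uW: "u \<notin> W" using u WA by blast
    have \<phi>Z: "\<phi> v \<in> Z" if "v \<in> NF - {y}" for v
      using that xNF NFV \<beta>Zin \<iota>lt unfolding \<phi>_def by auto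
    have \<phi>inj: "inj_on \<phi> (insert x NF)"
    proof (rule inj_onI)
      fix v1 v2 assume v1: "v1 \<in> insert x NF" and v2: "v2 \<in> insert x NF" and e: "\<phi> v1 = \<phi> v2"
      have wZ: "w \<notin> Z" using w WZ by blast
      have uZ': "u \<notin> Z" using u by blast
      have wu_ne: "w \<noteq> u" using w uW by blast
      show "v1 = v2"
      proof (cases "v1 = x \<or> v1 = y"; cases "v2 = x \<or> v2 = y")
        assume "v1 = x \<or> v1 = y" "v2 = x \<or> v2 = y"
        then show ?thesis using e wu_ne xy2 unfolding \<phi>_def by auto
      next
        assume a: "v1 = x \<or> v1 = y" "\<not> (v2 = x \<or> v2 = y)"
        then have "\<phi> v2 \<in> Z" using \<phi>Z v2 by blast
        moreover have "\<phi> v1 \<notin> Z" using a wZ uZ' xy2 unfolding \<phi>_def by auto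
        ultimately show ?thesis using e by simp
      next
        assume a: "\<not> (v1 = x \<or> v1 = y)" "v2 = x \<or> v2 = y"
        then have "\<phi> v1 \<in> Z" using \<phi>Z v1 by blast
        moreover have "\<phi> v2 \<notin> Z" using a wZ uZ' xy2 unfolding \<phi>_def by auto
        ultimately show ?thesis using e by simp
      next
        assume a: "\<not> (v1 = x \<or> v1 = y)" "\<not> (v2 = x \<or> v2 = y)"
        then have v12: "v1 \<in> VF" "v2 \<in> VF" using v1 v2 NFV by auto
        have "\<beta> (m + \<iota> v1) = \<beta> (m + \<iota> v2)" using e a unfolding \<phi>_def by simp
        then have "m + \<iota> v1 = m + \<iota> v2" using \<beta>inj \<iota>lt v12 by (auto dest: inj_onD)
        then show ?thesis using \<iota>inj v12 by (auto dest: inj_onD)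
      qed
    qed
    have \<phi>img: "\<phi> ` (insert x NF) \<subseteq> insert w (insert u Z)"
    proof
      fix t assume "t \<in> \<phi> ` (insert x NF)"
      then obtain v where v: "v \<in> insert x NF" "t = \<phi> v" by blast
      show "t \<in> insert w (insert u Z)"
      proof (cases "v = x \<or> v = y")
        case True then show ?thesis using v unfolding \<phi>_def by auto
      next
        case False then have "\<phi> v \<in> Z" using \<phi>Z v by blast
        then show ?thesis using v by simp
      qed
    qed
    have Qn: "insert w (insert u Z) \<subseteq> {..<n}" using w u Wn ZA AU Un by blast
    have "\<phi> ` (insert x NF) \<subseteq> {..<n}" using \<phi>img Qn by blast
    then have "ext_ok G A VF EF (insert x NF) \<phi>" using ext3 \<phi>inj unfolding EXT_def NF_def by blast
    then obtain \<psi> where \<psi>: "inj_on \<psi> VF" "\<forall>v\<in>insert x NF. \<psi> v = \<phi> v"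
      "\<psi> ` (VF - insert x NF) \<subseteq> A - \<phi> ` (insert x NF)" "\<forall>f\<in>EF. \<not> f \<subseteq> insert x NF \<longrightarrow> \<psi> ` f \<in> G"
      unfolding ext_ok_def by blast
    have \<psi>x: "\<psi> x = w" and \<psi>y: "\<psi> y = u" using \<psi>(2) yNF xy2 unfolding \<phi>_def by auto
    have Qcl: "{q1, q2} \<in> G" if "q1 \<in> insert w (insert u Z)" "q2 \<in> insert w (insert u Z)" "q1 \<noteq> q2" for q1 q2
    proof -
      have "q1 \<in> W \<union> Z \<and> q2 \<in> W \<union> Z \<or> {q1, q2} = {w, u} \<or> (\<exists>z\<in>Z. {q1, q2} = {u, z})"
        using that w by auto
      then show ?thesis using Kedge that wu uZ by auto
    qed
    have \<psi>V: "\<psi> v \<in> insert u (Z \<union> A)" if "v \<in> VF" "v \<noteq> x" for v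
    proof (cases "v \<in> insert x NF")
      case True then show ?thesis using \<psi>(2) \<phi>Z that \<psi>y by (cases "v = y") auto
    next
      case False then show ?thesis using \<psi>(3) that by blast
    qed
    have allG: "\<forall>f\<in>EF. \<psi> ` f \<in> G"
    proof
      fix f assume f: "f \<in> EF"
      show "\<psi> ` f \<in> G"
      proof (cases "f \<subseteq> insert x NF")
        case True
        obtain c d where cd: "c \<in> VF" "d \<in> VF" "c \<noteq> d" "f = {c, d}" using graphF[OF f] by blast
        have "\<psi> c \<noteq> \<psi> d" using \<psi>(1) cd by (auto dest: inj_onD)
        moreover have "\<psi> c \<in> insert w (insert u Z)" "\<psi> d \<in> insert w (insert u Z)"
          using True cd \<psi>(2) \<phi>img by auto
        ultimately show ?thesis using Qcl cd by simp
      qed (use \<psi>(4) f in blast)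
    qed
    have \<psi>n: "\<psi> ` VF \<subseteq> {..<n}"
    proof
      fix t assume "t \<in> \<psi> ` VF"
      then obtain v where v: "v \<in> VF" "t = \<psi> v" by blast
      show "t \<in> {..<n}"
      proof (cases "v = x")
        case True then show ?thesis using v \<psi>x Qn by auto
      next
        case False then show ?thesis using \<psi>V[OF v(1)] v Qn AU Un by auto
      qed
    qed
    let ?C = "(\<lambda>f. \<psi> ` f) ` EF"
    have C: "?C \<in> copies n VF EF G" by (rule copy_intro[OF \<psi>(1) \<psi>n allG])
    have "\<psi> ` {x, y} = {w, u}" using \<psi>x \<psi>y by simp
    then have eC: "{w, u} \<in> ?C" using xy by (metis imageI)
    have "\<forall>c\<in>?C - {{w, u}}. sp ?X c"
    proof
      fix c assume c: "c \<in> ?C - {{w, u}}"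
      then obtain f where f: "f \<in> EF" "c = \<psi> ` f" by blast
      obtain a' b' where ab': "a' \<in> VF" "b' \<in> VF" "a' \<noteq> b'" "f = {a', b'}" using graphF[OF f(1)] by blast
      have cG: "c \<in> G" using allG f by blast
      show "sp ?X c"
      proof (cases "a' = x \<or> b' = x")
        case True
        then obtain o' where o': "o' \<in> VF" "f = {x, o'}" "o' \<noteq> x" using ab' by auto
        have oNF: "o' \<in> NF" using o' f unfolding NF_def by simp
        have "o' \<noteq> y" using o' c f \<psi>x \<psi>y by auto
        then have "\<psi> o' \<in> Z" using \<psi>(2) \<phi>Z oNF by auto
        moreover have "w \<noteq> \<psi> o'" using \<psi>x \<psi>(1) o' xV by (auto dest: inj_onD)
        ultimately have "sp ?X {w, \<psi> o'}" using spK w by blast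
        then show ?thesis using f o' \<psi>x by simp
      next
        case False
        then have "c \<subseteq> insert u (Z \<union> A)" using f ab' \<psi>V by auto
        then have "c \<subseteq> U - W" using u ZU AU WA uW by blast
        then have "c \<in> EU G (U - W)" using cG unfolding EU_def by blast
        then have "c \<in> ?X" by (rule UnI1)
        then show ?thesis by (rule sp_mem)
      qed
    qed
    then show ?thesis using copy_span[OF Xs C eC] by blast
  qed
  define Zn where "Zn = {b..<b+s}"
  define VP4 where "VP4 = VF \<union> Zn"
  define S4 where "S4 = {x, y} \<union> Zn"
  have ZnVF: "Zn \<inter> VF = {}" unfolding Zn_def using bVF by force
  have xZn: "x \<notin> Zn" "y \<notin> Zn" using ZnVF xV yV by blast+
  have spb2: "sp ?X {w, u}" if w: "w \<in> W" and u: "u \<in> U - W - Z" and wu: "{w, u} \<in> G" for w u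
  proof -
    define \<phi> where "\<phi> v = (if v = x then w else if v = y then u else \<beta> (m + (v - b)))" for v
    have uW: "u \<notin> W" "u \<notin> Z" using u by auto
    have wZ: "w \<notin> Z" using w WZ by blast
    have wu_ne: "w \<noteq> u" using w uW by blast
    have \<phi>Zn: "\<phi> v \<in> Z" if "v \<in> Zn" for v
    proof -
      have "v \<noteq> x" "v \<noteq> y" "v - b < s" using that xZn unfolding Zn_def by auto
      then show ?thesis unfolding \<phi>_def using \<beta>Zin by simp
    qed
    have \<phi>inj: "inj_on \<phi> S4"
    proof (rule inj_onI)
      fix v1 v2 assume v1: "v1 \<in> S4" and v2: "v2 \<in> S4" and e: "\<phi> v1 = \<phi> v2"
      show "v1 = v2"
      proof (cases "v1 \<in> Zn"; cases "v2 \<in> Zn")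
        assume a: "v1 \<in> Zn" "v2 \<in> Zn"
        then have "v1 \<noteq> x" "v1 \<noteq> y" "v2 \<noteq> x" "v2 \<noteq> y" using xZn by auto
        then have "\<beta> (m + (v1 - b)) = \<beta> (m + (v2 - b))" using e unfolding \<phi>_def by simp
        moreover have "m + (v1 - b) < m + s" "m + (v2 - b) < m + s" using a unfolding Zn_def by auto
        ultimately have "m + (v1 - b) = m + (v2 - b)" using \<beta>inj by (auto dest: inj_onD)
        then show ?thesis using a unfolding Zn_def by auto
      next
        assume a: "v1 \<in> Zn" "v2 \<notin> Zn"
        then have "\<phi> v1 \<in> Z" using \<phi>Zn by blast
        moreover have "v2 = x \<or> v2 = y" using a v2 unfolding S4_def by blast
        then have "\<phi> v2 \<notin> Z" using wZ uW xy2 unfolding \<phi>_def by auto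
        ultimately show ?thesis using e by simp
      next
        assume a: "v1 \<notin> Zn" "v2 \<in> Zn"
        then have "\<phi> v2 \<in> Z" using \<phi>Zn by blast
        moreover have "v1 = x \<or> v1 = y" using a v1 unfolding S4_def by blast
        then have "\<phi> v1 \<notin> Z" using wZ uW xy2 unfolding \<phi>_def by auto
        ultimately show ?thesis using e by simp
      next
        assume a: "v1 \<notin> Zn" "v2 \<notin> Zn"
        then have "v1 = x \<or> v1 = y" "v2 = x \<or> v2 = y" using v1 v2 unfolding S4_def by blast+
        then show ?thesis using e wu_ne xy2 unfolding \<phi>_def by auto
      qed
    qed
    have \<phi>img: "\<phi> ` S4 \<subseteq> insert w (insert u Z)"
    proof
      fix t assume "t \<in> \<phi> ` S4"
      then obtain v where v: "v \<in> S4" "t = \<phi> v" by blast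
      show "t \<in> insert w (insert u Z)"
      proof (cases "v \<in> Zn")
        case True then show ?thesis using \<phi>Zn v by blast
      next
        case False then have "v = x \<or> v = y" using v unfolding S4_def by blast
        then show ?thesis using v xy2 unfolding \<phi>_def by auto
      qed
    qed
    have ZS4: "Z \<subseteq> \<phi> ` S4"
    proof
      fix z assume "z \<in> Z"
      then obtain j where j: "j \<in> {m..<m+s}" "z = \<beta> j" using \<beta>Z by blast
      have bj: "b + (j - m) \<in> Zn" using j unfolding Zn_def by auto
      then have "\<phi> (b + (j - m)) = \<beta> (m + (b + (j - m) - b))" using xZn unfolding \<phi>_def by auto
      also have "\<dots> = z" using j by simp
      finally show "z \<in> \<phi> ` S4" using bj unfolding S4_def by force
    qed
    have Qn: "insert w (insert u Z) \<subseteq> {..<n}" using w u Wn ZA AU Un by blast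
    have "\<phi> ` S4 \<subseteq> {..<n}" using \<phi>img Qn by blast
    then have "ext_ok G A VP4 (EF \<union> {{z, v} | z v. z \<in> Zn \<and> v \<in> NF - {y}}) S4 \<phi>"
      using ext4 \<phi>inj unfolding EXT_def NF_def Zn_def VP4_def S4_def by blast
    then obtain \<psi> where \<psi>: "inj_on \<psi> VP4" "\<forall>v\<in>S4. \<psi> v = \<phi> v"
      "\<psi> ` (VP4 - S4) \<subseteq> A - \<phi> ` S4"
      "\<forall>f\<in>EF \<union> {{z, v} | z v. z \<in> Zn \<and> v \<in> NF - {y}}. \<not> f \<subseteq> S4 \<longrightarrow> \<psi> ` f \<in> G"
      unfolding ext_ok_def by blast
    have S4x: "x \<in> S4" "y \<in> S4" unfolding S4_def by auto
    have \<psi>x: "\<psi> x = w" and \<psi>y: "\<psi> y = u" using \<psi>(2) S4x xy2 unfolding \<phi>_def by auto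
    have \<psi>inj: "inj_on \<psi> VF" using \<psi>(1) unfolding VP4_def by (rule inj_on_subset) blast
    have nS4: "v \<notin> S4" if "v \<in> VF" "v \<noteq> x" "v \<noteq> y" for v
      using that ZnVF unfolding S4_def by blast
    have \<psi>A: "\<psi> v \<in> A - \<phi> ` S4" if "v \<in> VF" "v \<noteq> x" "v \<noteq> y" for v
    proof -
      have "v \<in> VP4 - S4" using that nS4 unfolding VP4_def by blast
      then show ?thesis using \<psi>(3) by blast
    qed
    have EFnot: "\<not> f \<subseteq> S4" if fEF: "f \<in> EF" and fne: "f \<noteq> {x, y}" for f
    proof
      assume fS: "f \<subseteq> S4"
      obtain c d where cd: "c \<in> VF" "d \<in> VF" "c \<noteq> d" "f = {c, d}" using graphF[OF fEF] by blast
      have "c \<in> {x, y}" "d \<in> {x, y}" using cd fS ZnVF unfolding S4_def by blast+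
      then have "f = {x, y}" using cd by auto
      then show False using fne by simp
    qed
    have allG: "\<forall>f\<in>EF. \<psi> ` f \<in> G"
    proof
      fix f assume f: "f \<in> EF"
      show "\<psi> ` f \<in> G"
      proof (cases "f = {x, y}")
        case True then show ?thesis using \<psi>x \<psi>y wu by simp
      next
        case False
        have "f \<in> EF \<union> {{z, v} | z v. z \<in> Zn \<and> v \<in> NF - {y}}" using f by (rule UnI1)
        moreover have "\<not> f \<subseteq> S4" using EFnot[OF f False] .
        ultimately show ?thesis using \<psi>(4) by blast
      qed
    qed
    have \<psi>n: "\<psi> ` VF \<subseteq> {..<n}"
    proof
      fix t assume "t \<in> \<psi> ` VF"
      then obtain v where v: "v \<in> VF" "t = \<psi> v" by blast
      show "t \<in> {..<n}"
      proof (cases "v = x \<or> v = y")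
        case True then show ?thesis using v \<psi>x \<psi>y Qn by auto
      next
        case False then have "\<psi> v \<in> A" using \<psi>A v by blast
        then show ?thesis using v AU Un by auto
      qed
    qed
    text \<open>the neighbours of x (other than y) are mapped into A, adjacent to w and to all of Z\<close>
    have nb: "sp ?X {w, \<psi> v}" if v: "v \<in> NF" "v \<noteq> y" for v
    proof -
      have vV: "v \<in> VF" "v \<noteq> x" using v NFV xNF by auto
      have vA: "\<psi> v \<in> A - \<phi> ` S4" using \<psi>A vV v by blast
      then have vAZ: "\<psi> v \<in> A - Z" using ZS4 by blast
      have xv: "{x, v} \<in> EF" using v unfolding NF_def by simp
      have "\<psi> ` {x, v} \<in> G" using allG xv by blast
      then have wv: "{w, \<psi> v} \<in> G" using \<psi>x by simp
      have vZ: "\<forall>z\<in>Z. {\<psi> v, z} \<in> G"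
      proof
        fix z assume z: "z \<in> Z"
        then obtain j where j: "j \<in> {m..<m+s}" "z = \<beta> j" using \<beta>Z by blast
        define zz where "zz = b + (j - m)"
        have zzZn: "zz \<in> Zn" using j unfolding Zn_def zz_def by auto
        have zzS4: "zz \<in> S4" using zzZn unfolding S4_def by blast
        have "\<psi> zz = \<phi> zz" using \<psi>(2) zzS4 by blast
        also have "\<phi> zz = \<beta> (m + (zz - b))" using zzZn xZn unfolding \<phi>_def by auto
        also have "\<dots> = z" using j unfolding zz_def by simp
        finally have \<psi>zz: "\<psi> zz = z" .
        have "{zz, v} \<in> EF \<union> {{z, v} | z v. z \<in> Zn \<and> v \<in> NF - {y}}" using zzZn v by blast
        moreover have "\<not> {zz, v} \<subseteq> S4" using nS4 vV v by blast
        ultimately have "\<psi> ` {zz, v} \<in> G" using \<psi>(4) by blast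
        then show "{\<psi> v, z} \<in> G" using \<psi>zz by (simp add: insert_commute)
      qed
      show ?thesis by (rule spb1[OF w vAZ wv vZ])
    qed
    let ?C = "(\<lambda>f. \<psi> ` f) ` EF"
    have C: "?C \<in> copies n VF EF G" by (rule copy_intro[OF \<psi>inj \<psi>n allG])
    have "\<psi> ` {x, y} = {w, u}" using \<psi>x \<psi>y by simp
    then have eC: "{w, u} \<in> ?C" using xy by (metis imageI)
    have "\<forall>c\<in>?C - {{w, u}}. sp ?X c"
    proof
      fix c assume c: "c \<in> ?C - {{w, u}}"
      then obtain f where f: "f \<in> EF" "c = \<psi> ` f" by blast
      obtain a' b' where ab': "a' \<in> VF" "b' \<in> VF" "a' \<noteq> b'" "f = {a', b'}" using graphF[OF f(1)] by blast
      have cG: "c \<in> G" using allG f by blast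
      show "sp ?X c"
      proof (cases "a' = x \<or> b' = x")
        case True
        then obtain o' where o': "o' \<in> VF" "f = {x, o'}" "o' \<noteq> x" using ab' by auto
        have oNF: "o' \<in> NF" using o' f unfolding NF_def by simp
        have "o' \<noteq> y" using o' c f \<psi>x \<psi>y by auto
        then have "sp ?X {w, \<psi> o'}" using nb oNF by blast
        then show ?thesis using f o' \<psi>x by simp
      next
        case False
        have "\<psi> a' \<in> insert u A" "\<psi> b' \<in> insert u A" using False ab' \<psi>y \<psi>A by auto
        then have "c \<subseteq> insert u A" using f ab' by simp
        then have "c \<subseteq> U - W" using u AU WA by blast
        then have "c \<in> EU G (U - W)" using cG unfolding EU_def by blast
        then have "c \<in> ?X" by (rule UnI1)
        then show ?thesis by (rule sp_mem)
      qed
    qed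
    then show ?thesis using copy_span[OF Xs C eC] by blast
  qed
  have spU: "\<forall>e\<in>EU G U. sp ?X e"
  proof
    fix e assume eU: "e \<in> EU G U"
    then have eG: "e \<in> G" and eUU: "e \<subseteq> U" unfolding EU_def by auto
    obtain a1 a2 where a12: "a1 \<noteq> a2" "e = {a1, a2}" using edge_form[OF eG] by blast
    show "sp ?X e"
    proof (cases "e \<inter> W = {}")
      case True
      then have "e \<in> EU G (U - W)" using eG eUU unfolding EU_def by blast
      then have "e \<in> ?X" by (rule UnI1)
      then show ?thesis by (rule sp_mem)
    next
      case False
      then obtain w u where wu: "w \<in> W" "e = {w, u}" "w \<noteq> u" using a12 by blast
      have uU: "u \<in> U" using wu eUU by blast
      show ?thesis
      proof (cases "u \<in> W \<union> Z")
        case True then show ?thesis using spK wu by blast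
      next
        case False
        then have "u \<in> U - W - Z" using uU by blast
        then show ?thesis using spb2 wu eG by blast
      qed
    qed
  qed
  have finH: "finite H" using Hsub finite_all_edges finite_subset by blast
  have "r (EU G U) \<le> r (?X \<union> EU G U)" by (rule r_mono[OF M]) blast
  also have "\<dots> = r ?X" by (rule span_all[OF Xs EU_sub spU])
  also have "\<dots> \<le> r (EU G (U - W)) + card (?bE ` H)"
    using r_union_le[OF M EU_sub, of "?bE ` H" "U - W"] Xs by blast
  also have "card (?bE ` H) \<le> card H" using finH by (rule card_image_le)
  finally show ?thesis by simp
qed

end


context ws
begin

lemma exists_good:
  fixes x y m s b k L :: nat and U A :: "nat set" and H :: "nat set set"
  assumes xy: "{x, y} \<in> EF" and xy2: "x \<noteq> y"
    and ext1: "EXT n G A VF EF {x, y}"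
    and ext2: "EXT n G A {..<m+s} (all_edges (m+s)) {..<m}"
    and ext3: "EXT n G A VF EF (insert x {v. {x, v} \<in> EF})"
    and ext4: "EXT n G A (VF \<union> {b..<b+s}) (EF \<union> {{z, v} | z v. z \<in> {b..<b+s} \<and> v \<in> {v. {x, v} \<in> EF} - {y}})
                 ({x, y} \<union> {b..<b+s})"
    and bVF: "\<forall>v\<in>VF. v < b" and sVF: "card VF \<le> s"
    and noind: "\<forall>S. S \<subseteq> {..<n} \<longrightarrow> card S = L \<longrightarrow> (\<exists>u\<in>S. \<exists>v\<in>S. u \<noteq> v \<and> {u, v} \<in> G)"
    and Hp: "wsat_process (m+s) (all_edges (m+s)) VF EF H" and cH: "card H < (k+1) * m"
    and AU: "A \<subseteq> U" and Un: "U \<subseteq> {..<n}" and big: "card (U - A) \<ge> (m + L) choose m"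
  shows "\<exists>v\<in>U - A. r (EU G U) - r (EU G (U - {v})) \<le> k"
proof (rule ccontr)
  assume "\<not> ?thesis"
  then have bad: "\<forall>v\<in>U - A. r (EU G U) - r (EU G (U - {v})) \<ge> k + 1"
    by (metis Suc_eq_plus1 not_less_eq_eq)
  have fUA: "finite (U - A)" using Un finite_subset by blast
  from ramsey_G[OF fUA big, of G]
  obtain W where W: "W \<subseteq> U - A" "card W = m" "\<forall>u\<in>W. \<forall>v\<in>W. u \<noteq> v \<longrightarrow> {u, v} \<in> G"
  proof
    assume "\<exists>S\<subseteq>U - A. card S = L \<and> (\<forall>u\<in>S. \<forall>v\<in>S. u \<noteq> v \<longrightarrow> {u, v} \<notin> G)"
    then obtain S where S: "S \<subseteq> U - A" "card S = L" "\<forall>u\<in>S. \<forall>v\<in>S. u \<noteq> v \<longrightarrow> {u, v} \<notin> G" by blast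
    have "S \<subseteq> {..<n}" using S(1) Un by blast
    then show ?thesis using noind S(2,3) by blast
  qed blast
  have fW: "finite W" using W(1) fUA finite_subset by blast
  obtain e where e: "bij_betw e {0..<m} W" using ex_bij_betw_nat_finite[OF fW] W(2) by blast
  have einj: "inj_on e {..<m}" using e bij_betw_imp_inj_on by (simp add: atLeast0LessThan)
  have eimg: "e ` {..<m} = W" using e bij_betw_imp_surj_on by (metis atLeast0LessThan)
  have "e ` {..<m} \<subseteq> {..<n}" using eimg W(1) Un by blast
  then have "ext_ok G A {..<m+s} (all_edges (m+s)) {..<m} e" using ext2 einj unfolding EXT_def by blast
  then obtain \<beta> where \<beta>: "inj_on \<beta> {..<m+s}" "\<forall>v\<in>{..<m}. \<beta> v = e v"
      "\<beta> ` ({..<m+s} - {..<m}) \<subseteq> A - e ` {..<m}"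
      "\<forall>f\<in>all_edges (m+s). \<not> f \<subseteq> {..<m} \<longrightarrow> \<beta> ` f \<in> G"
    unfolding ext_ok_def by blast
  have \<beta>W: "\<beta> ` {..<m} = W" using \<beta>(2) eimg by (metis image_cong)
  define Z where "Z = \<beta> ` {m..<m+s}"
  have mm: "{..<m+s} - {..<m} = {m..<m+s}" by auto
  have ZA: "Z \<subseteq> A" using \<beta>(3) unfolding Z_def mm by blast
  have K: "\<forall>i<m+s. \<forall>j<m+s. i \<noteq> j \<longrightarrow> {\<beta> i, \<beta> j} \<in> G"
  proof (intro allI impI)
    fix i j assume ij: "i < m+s" "j < m+s" "i \<noteq> j"
    show "{\<beta> i, \<beta> j} \<in> G"
    proof (cases "i < m \<and> j < m")
      case True
      then have "\<beta> i \<in> W" "\<beta> j \<in> W" using \<beta>W by auto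
      moreover have "\<beta> i \<noteq> \<beta> j" using \<beta>(1) ij by (auto dest: inj_onD)
      ultimately show ?thesis using W(3) by blast
    next
      case False
      have "{i, j} \<in> all_edges (m+s)" using ij unfolding all_edges_def by blast
      moreover have "\<not> {i, j} \<subseteq> {..<m}" using False by auto
      ultimately have "\<beta> ` {i, j} \<in> G" using \<beta>(4) by blast
      then show ?thesis by simp
    qed
  qed
  have WUA: "W \<subseteq> U - A" using W(1) .
  have up: "r (EU G U) \<le> r (EU G (U - W)) + card H"
    by (rule upper[OF xy xy2 ext3 ext4 bVF sVF AU Un WUA \<beta>(1) \<beta>W Z_def[symmetric] ZA K Hp])
  have low: "r (EU G (U - W)) + (\<Sum>w\<in>W. r (EU G U) - r (EU G (U - {w}))) \<le> r (EU G U)"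
    by (rule lower_sum[OF xy xy2 ext1 AU Un WUA fW])
  have "(\<Sum>w\<in>W. k + 1) \<le> (\<Sum>w\<in>W. r (EU G U) - r (EU G (U - {w})))"
    by (rule sum_mono) (use bad WUA in blast)
  then have "(k + 1) * m \<le> (\<Sum>w\<in>W. r (EU G U) - r (EU G (U - {w})))" using W(2) by (simp add: mult.commute)
  then show False using up low cH by linarith
qed

lemma card_EU: "finite U \<Longrightarrow> card (EU G U) \<le> card U ^ 2"
proof -
  assume fU: "finite U"
  have "EU G U \<subseteq> (\<lambda>(a, b). {a, b}) ` (U \<times> U)"
  proof
    fix e assume "e \<in> EU G U"
    then have eG: "e \<in> G" and eU: "e \<subseteq> U" unfolding EU_def by auto
    obtain a b where "a \<noteq> b" "e = {a, b}" using edge_form[OF eG] by blast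
    then show "e \<in> (\<lambda>(a, b). {a, b}) ` (U \<times> U)" using eU by auto
  qed
  then have "card (EU G U) \<le> card ((\<lambda>(a, b). {a, b}) ` (U \<times> U))"
    using fU by (intro card_mono) auto
  also have "\<dots> \<le> card (U \<times> U)" using fU by (intro card_image_le) auto
  also have "\<dots> = card U ^ 2" by (simp add: card_cartesian_product power2_eq_square)
  finally show ?thesis .
qed

lemma peel:
  fixes k R :: nat and A :: "nat set"
  assumes good: "\<forall>U. A \<subseteq> U \<longrightarrow> U \<subseteq> {..<n} \<longrightarrow> card (U - A) \<ge> R \<longrightarrow>
                  (\<exists>v\<in>U - A. r (EU G U) - r (EU G (U - {v})) \<le> k)"
  shows "A \<subseteq> U \<Longrightarrow> U \<subseteq> {..<n} \<Longrightarrow> r (EU G U) \<le> k * card (U - A) + (card A + R)^2"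
proof (induction "card (U - A)" arbitrary: U rule: less_induct)
  case less
  have fU: "finite U" using less.prems finite_subset by blast
  have fA: "finite A" using less.prems fU finite_subset by blast
  show ?case
  proof (cases "card (U - A) < R")
    case True
    have cU: "card U = card A + card (U - A)"
      using less.prems(1) fU fA by (metis card_Diff_subset card_mono le_add_diff_inverse)
    have "r (EU G U) \<le> card (EU G U)" by (rule r_le_card[OF M EU_sub])
    also have "\<dots> \<le> card U ^ 2" using card_EU[OF fU] .
    also have "\<dots> \<le> (card A + R)^2" using cU True by (intro power_mono) auto
    finally show ?thesis by simp
  next
    case False
    then obtain v where v: "v \<in> U - A" "r (EU G U) - r (EU G (U - {v})) \<le> k"
      using good less.prems by (meson not_le)
    have A': "A \<subseteq> U - {v}" using less.prems v by blast
    have U'n: "U - {v} \<subseteq> {..<n}" using less.prems by blast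
    have c1: "card (U - {v} - A) = card (U - A) - 1"
    proof -
      have "U - {v} - A = (U - A) - {v}" by blast
      then show ?thesis using v fU by simp
    qed
    have c0: "card (U - A) \<ge> 1" using v fU by (metis One_nat_def Suc_leI card_gt_0_iff empty_iff finite_Diff)
    have IH: "r (EU G (U - {v})) \<le> k * card (U - {v} - A) + (card A + R)^2"
      using less.hyps[OF _ A' U'n] c1 c0 by simp
    have "r (EU G U) \<le> r (EU G (U - {v})) + k" using v by linarith
    also have "\<dots> \<le> k * (card (U - A) - 1) + (card A + R)^2 + k" using IH c1 by simp
    also have "\<dots> = k * card (U - A) + (card A + R)^2"
    proof -
      have "k * (card (U - A) - 1) + k = k * card (U - A)" using c0 by (cases "card (U - A)") auto
      then show ?thesis by simp
    qed
    finally show ?thesis .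
  qed
qed

lemma EU_all: "EU G {..<n} = G"
  using Gsub unfolding EU_def all_edges_def by auto

end


definition NoInd :: "nat \<Rightarrow> nat set set \<Rightarrow> nat \<Rightarrow> bool" where
  "NoInd n G L \<longleftrightarrow> (\<forall>S. S \<subseteq> {..<n} \<longrightarrow> card S = L \<longrightarrow> (\<exists>u\<in>S. \<exists>v\<in>S. u \<noteq> v \<and> {u, v} \<in> G))"

definition Lf :: "real \<Rightarrow> nat \<Rightarrow> nat" where
  "Lf p n = nat \<lceil>(4 / (- ln (1 - p))) * ln (real n)\<rceil> + 2"

lemma choose_le_pow: "n choose r \<le> n ^ r"
proof (cases "r \<le> n")
  case True then show ?thesis by (rule binomial_le_pow)
next
  case False then show ?thesis by (simp add: binomial_eq_0)
qed

lemma two_choose: "2 * (L choose 2) = L * (L - 1)"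
proof (induction L)
  case 0 then show ?case by simp
next
  case (Suc L)
  have "(Suc L choose 2) = (L choose 1) + (L choose 2)" by (simp add: numeral_2_eq_2)
  then have "2 * (Suc L choose 2) = 2 * L + L * (L - 1)" using Suc by simp
  also have "\<dots> = Suc L * (Suc L - 1)" by (cases L) (auto simp: algebra_simps)
  finally show ?case .
qed

lemma noind_bound:
  fixes p :: real assumes p0: "0 \<le> p" and p1: "p \<le> 1"
  shows "pr p (all_edges n) (\<lambda>G. \<not> NoInd n G L) \<le> real n ^ L * (1 - p) ^ (L choose 2)"
proof -
  define Ss where "Ss = {S. S \<subseteq> {..<n} \<and> card S = L}"
  define T where "T S = {e. e \<subseteq> S \<and> card e = 2}" for S :: "nat set"
  have fSs: "finite Ss" unfolding Ss_def by simp
  have cSs: "card Ss = n choose L" unfolding Ss_def using n_subsets[of "{..<n}" L] by simp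
  have TE: "T S \<subseteq> all_edges n" if "S \<in> Ss" for S
    using that unfolding T_def Ss_def all_edges_def by (auto simp: card_2_iff)
  have cT: "card (T S) = L choose 2" if "S \<in> Ss" for S
  proof -
    have "finite S" "card S = L" using that unfolding Ss_def by (auto intro: finite_subset)
    then show ?thesis unfolding T_def using n_subsets[of S 2] by simp
  qed
  have "pr p (all_edges n) (\<lambda>G. \<not> NoInd n G L) \<le> pr p (all_edges n) (\<lambda>G. \<exists>S\<in>Ss. T S \<inter> G = {})"
  proof (rule pr_mono[OF p0 p1 finite_all_edges])
    fix G assume "\<not> NoInd n G L"
    then obtain S where S: "S \<subseteq> {..<n}" "card S = L" "\<forall>u\<in>S. \<forall>v\<in>S. u \<noteq> v \<longrightarrow> {u, v} \<notin> G"
      unfolding NoInd_def by blast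
    have "T S \<inter> G = {}"
    proof (rule ccontr)
      assume "T S \<inter> G \<noteq> {}"
      then obtain e where e: "e \<subseteq> S" "card e = 2" "e \<in> G" unfolding T_def by blast
      then obtain u v where "e = {u, v}" "u \<noteq> v" by (auto simp: card_2_iff)
      then show False using e S(3) by blast
    qed
    moreover have "S \<in> Ss" using S unfolding Ss_def by blast
    ultimately show "\<exists>S\<in>Ss. T S \<inter> G = {}" by blast
  qed
  also have "\<dots> \<le> (\<Sum>S\<in>Ss. pr p (all_edges n) (\<lambda>G. T S \<inter> G = {}))"
    by (rule pr_union[OF p0 p1 finite_all_edges fSs])
  also have "\<dots> = (\<Sum>S\<in>Ss. (1 - p) ^ (L choose 2))"
    by (rule sum.cong[OF refl]) (simp add: pr_none_in[OF finite_all_edges TE] cT)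
  also have "\<dots> = real (n choose L) * (1 - p) ^ (L choose 2)" using cSs by simp
  also have "\<dots> \<le> real n ^ L * (1 - p) ^ (L choose 2)"
  proof (rule mult_right_mono)
    show "real (n choose L) \<le> real n ^ L" using choose_le_pow[of n L] by (metis of_nat_le_iff of_nat_power)
    show "0 \<le> (1 - p) ^ (L choose 2)" using p1 by simp
  qed
  finally show ?thesis .
qed

lemma noind_whp:
  fixes p :: real assumes p0: "0 < p" and p1: "p < 1"
  shows "(\<lambda>n. pr p (all_edges n) (\<lambda>G. \<not> NoInd n G (Lf p n))) \<longlonglongrightarrow> 0"
proof -
  define \<beta> where "\<beta> = - ln (1 - p)"
  have \<beta>0: "\<beta> > 0" unfolding \<beta>_def using p0 p1 by simp
  have ev: "eventually (\<lambda>n. pr p (all_edges n) (\<lambda>G. \<not> NoInd n G (Lf p n)) \<le> 1 / real n) sequentially"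
    using eventually_ge_at_top[of "1::nat"]
  proof eventually_elim
    case (elim n)
    define L where "L = Lf p n"
    define y where "y = ln (real n)"
    have y0: "y \<ge> 0" unfolding y_def using elim by simp
    have npos: "real n > 0" using elim by simp
    have L1: "real L - 1 \<ge> 4 / \<beta> * y + 1" unfolding L_def Lf_def \<beta>_def y_def by linarith
    have L1': "real L \<ge> 1" using L1 \<beta>0 y0 by (smt (verit) divide_nonneg_nonneg mult_nonneg_nonneg)
    have c2: "real (L choose 2) = real L * (real L - 1) / 2"
    proof -
      have "real (2 * (L choose 2)) = real (L * (L - 1))" using two_choose[of L] by simp
      then show ?thesis using L1' by (simp add: of_nat_diff)
    qed
    have "pr p (all_edges n) (\<lambda>G. \<not> NoInd n G L) \<le> real n ^ L * (1 - p) ^ (L choose 2)"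
      using noind_bound p0 p1 by simp
    also have "real n ^ L = exp (real L * y)" unfolding y_def using npos by (simp add: exp_of_nat_mult)
    also have "(1 - p) ^ (L choose 2) = exp (- \<beta> * real (L choose 2))"
    proof -
      have "(1 - p) = exp (- \<beta>)" unfolding \<beta>_def using p1 by simp
      then have "(1 - p) ^ (L choose 2) = exp (- \<beta>) ^ (L choose 2)" by simp
      also have "\<dots> = exp (real (L choose 2) * (- \<beta>))" using exp_of_nat_mult[of "L choose 2" "- \<beta>"] by simp
      finally show ?thesis by (simp add: mult.commute)
    qed
    also have "exp (real L * y) * exp (- \<beta> * real (L choose 2)) = exp (real L * y - \<beta> * real (L choose 2))"
      by (simp add: exp_add[symmetric])
    also have "\<dots> \<le> exp (- y)"
    proof -
      have "\<beta> * real (L choose 2) = real L * (\<beta> * (real L - 1)) / 2" unfolding c2 by (simp add: algebra_simps)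
      moreover have "\<beta> * (real L - 1) \<ge> \<beta> * (4 / \<beta> * y + 1)" using L1 \<beta>0 by (intro mult_left_mono) auto
      moreover have "\<beta> * (4 / \<beta> * y + 1) = 4 * y + \<beta>" using \<beta>0 by (simp add: field_simps)
      ultimately have "\<beta> * real (L choose 2) \<ge> real L * (4 * y + \<beta>) / 2"
        using L1' by (smt (verit) divide_right_mono mult_left_mono)
      moreover have "real L * (4 * y + \<beta>) / 2 \<ge> 2 * real L * y" using L1' \<beta>0 y0 by (simp add: field_simps)
      moreover have "2 * real L * y \<ge> real L * y + y"
      proof -
        have "real L * y \<ge> 1 * y" using L1' y0 by (intro mult_right_mono) auto
        then show ?thesis by (simp add: mult.commute)
      qed
      ultimately have "real L * y - \<beta> * real (L choose 2) \<le> - y" by linarith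
      then show ?thesis by simp
    qed
    also have "exp (- y) = 1 / real n" unfolding y_def using npos by (simp add: exp_minus inverse_eq_divide)
    finally show ?case unfolding L_def .
  qed
  have lim: "(\<lambda>n. 1 / real n) \<longlonglongrightarrow> (0::real)" by (rule lim_const_over_n)
  show ?thesis
  proof (rule tendsto_sandwich[OF _ ev tendsto_const lim])
    show "eventually (\<lambda>n. 0 \<le> pr p (all_edges n) (\<lambda>G. \<not> NoInd n G (Lf p n))) sequentially"
      by (intro always_eventually allI pr_nonneg) (use p0 p1 in auto)
  qed
qed


lemma matroid_triv: "finite G \<Longrightarrow> matroid G {{}}"
  unfolding matroid_def by auto

lemma mrank_triv: "mrank {{}} X = 0"
proof -
  have "{card Y | Y. Y \<in> {{}} \<and> Y \<subseteq> X} = {0}" by auto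
  then show ?thesis unfolding mrank_def by simp
qed

lemma rk_sat_le:
  assumes Gs: "G \<subseteq> all_edges n"
    and B: "\<And>I. weakly_sat_matroid n G VF EF I \<Longrightarrow> mrank I G \<le> B"
  shows "rk_sat n G VF EF \<le> B"
proof -
  have fG: "finite G" using Gs finite_all_edges finite_subset by blast
  let ?S = "{mrank I G | I. weakly_sat_matroid n G VF EF I}"
  have "?S \<subseteq> (\<lambda>I. mrank I G) ` Pow (Pow G)"
  proof
    fix t assume "t \<in> ?S"
    then obtain I where I: "weakly_sat_matroid n G VF EF I" "t = mrank I G" by blast
    then have "I \<subseteq> Pow G" unfolding weakly_sat_matroid_def matroid_def by blast
    then show "t \<in> (\<lambda>I. mrank I G) ` Pow (Pow G)" using I by blast
  qed
  moreover have "finite ((\<lambda>I. mrank I G) ` Pow (Pow G))" using fG by simp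
  ultimately have fS: "finite ?S" by (rule finite_subset)
  have "weakly_sat_matroid n G VF EF {{}}"
    unfolding weakly_sat_matroid_def by (simp add: matroid_triv[OF fG] mrank_triv)
  then have neS: "?S \<noteq> {}" by blast
  show ?thesis unfolding rk_sat_def using fS neS B by (intro Max.boundedI) auto
qed

lemma card_all_edges: "card (all_edges n) = n choose 2"
proof -
  have "all_edges n = {B. B \<subseteq> {..<n} \<and> card B = 2}"
    unfolding all_edges_def by (auto simp: card_2_iff)
  then show ?thesis using n_subsets[of "{..<n}" 2] by simp
qed

lemma wsat_noedge: "wsat n (all_edges n) VF {} = card (all_edges n)"
proof -
  have H: "H = all_edges n" if wp: "wsat_process n (all_edges n) VF {} H" for H
  proof -
    obtain es where es: "H \<subseteq> all_edges n" "set es = all_edges n - H"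
      "\<forall>i < length es. \<exists>C \<in> copies n VF {} (H \<union> set (take (Suc i) es)). es ! i \<in> C"
      using wp unfolding wsat_process_def by blast
    have "copies n VF {} S \<subseteq> {{}}" for S unfolding copies_def by auto
    then have "length es = 0" using es(3) by (metis empty_iff gr0I singletonD subsetD)
    then show ?thesis using es by auto
  qed
  have ex: "wsat_process n (all_edges n) VF {} (all_edges n)"
    unfolding wsat_process_def by (intro conjI exI[of _ "[]"]) auto
  show ?thesis unfolding wsat_def
  proof (rule Least_equality)
    show "\<exists>H. wsat_process n (all_edges n) VF {} H \<and> card H = card (all_edges n)" using ex by blast
    show "\<And>y. \<exists>H. wsat_process n (all_edges n) VF {} H \<and> card H = y \<Longrightarrow> card (all_edges n) \<le> y"
      using H by blast
  qed
qed

lemma not_conv_noedge: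
  assumes lim: "(\<lambda>n. real (wsat n (all_edges n) VF {}) / real n) \<longlonglongrightarrow> c"
  shows False
proof -
  have "Bseq (\<lambda>n. real (wsat n (all_edges n) VF {}) / real n)"
    using lim by (rule convergent_imp_Bseq[OF convergentI])
  then obtain K where K: "K > 0" "\<And>n. norm (real (wsat n (all_edges n) VF {}) / real n) \<le> K"
    unfolding Bseq_def by blast
  define n where "n = nat \<lceil>2 * K\<rceil> + 3"
  have n1: "real n \<ge> 2 * K + 3" unfolding n_def by linarith
  have nn: "n \<ge> 1" unfolding n_def by simp
  have "real (2 * (n choose 2)) = real (n * (n - 1))" using two_choose[of n] by simp
  then have "2 * real (n choose 2) = real n * real (n - 1)" by simp
  also have "real (n - 1) = real n - 1" using nn by (simp add: of_nat_diff)
  finally have "2 * real (n choose 2) = real n * (real n - 1)" .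
  then have "real (n choose 2) / real n = (real n - 1) / 2" using n1 K(1) by (simp add: field_simps)
  moreover have "real (wsat n (all_edges n) VF {}) = real (n choose 2)"
    using wsat_noedge card_all_edges by simp
  ultimately have eq: "real (wsat n (all_edges n) VF {}) / real n = (real n - 1) / 2" by simp
  have gt: "(real n - 1) / 2 > K" using n1 by simp
  have "real (wsat n (all_edges n) VF {}) / real n \<le> K" using K(2)[of n] by (simp add: abs_le_iff)
  then show False using eq gt by linarith
qed


lemma det:
  fixes x y m s b k L a :: nat and H :: "nat set set"
  assumes Gs: "G \<subseteq> all_edges n" and gF: "is_graph VF EF"
    and xy: "{x, y} \<in> EF" and xy2: "x \<noteq> y"
    and ext1: "EXT n G {..<a} VF EF {x, y}"
    and ext2: "EXT n G {..<a} {..<m+s} (all_edges (m+s)) {..<m}"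
    and ext3: "EXT n G {..<a} VF EF (insert x {v. {x, v} \<in> EF})"
    and ext4: "EXT n G {..<a} (VF \<union> {b..<b+s}) (EF \<union> {{z, v} | z v. z \<in> {b..<b+s} \<and> v \<in> {v. {x, v} \<in> EF} - {y}})
                 ({x, y} \<union> {b..<b+s})"
    and bVF: "\<forall>v\<in>VF. v < b" and sVF: "card VF \<le> s"
    and noind: "NoInd n G L"
    and Hp: "wsat_process (m+s) (all_edges (m+s)) VF EF H" and cH: "card H < (k+1) * m"
    and an: "a \<le> n"
  shows "rk_sat n G VF EF \<le> k * n + (a + ((m + L) choose m))^2"
proof (rule rk_sat_le[OF Gs])
  fix I assume WS: "weakly_sat_matroid n G VF EF I"
  interpret ws n G VF EF I using WS Gs gF by unfold_locales
  let ?A = "{..<a}"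
  let ?R = "(m + L) choose m"
  have noind': "\<forall>S. S \<subseteq> {..<n} \<longrightarrow> card S = L \<longrightarrow> (\<exists>u\<in>S. \<exists>v\<in>S. u \<noteq> v \<and> {u, v} \<in> G)"
    using noind unfolding NoInd_def .
  have good: "\<forall>U. ?A \<subseteq> U \<longrightarrow> U \<subseteq> {..<n} \<longrightarrow> card (U - ?A) \<ge> ?R \<longrightarrow>
                  (\<exists>v\<in>U - ?A. r (EU G U) - r (EU G (U - {v})) \<le> k)"
  proof (intro allI impI)
    fix U assume AU: "?A \<subseteq> U" and Un: "U \<subseteq> {..<n}" and big: "card (U - ?A) \<ge> ?R"
    show "\<exists>v\<in>U - ?A. r (EU G U) - r (EU G (U - {v})) \<le> k"
      by (rule exists_good[OF xy xy2 ext1 ext2 ext3 ext4 bVF sVF noind' Hp cH AU Un big])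
  qed
  have An: "?A \<subseteq> {..<n}" using an by auto
  have p: "r (EU G {..<n}) \<le> k * card ({..<n} - ?A) + (card ?A + ?R)^2"
    by (rule peel[OF good An subset_refl])
  have "card ({..<n} - ?A) \<le> n" by (simp add: card_Diff_subset)
  then have "k * card ({..<n} - ?A) \<le> k * n" by (rule mult_le_mono2)
  then have "r (EU G {..<n}) \<le> k * n + (a + ?R)^2" using p by (simp only: card_lessThan)
  then show "mrank I G \<le> k * n + (a + ?R)^2" using EU_all by simp
qed


lemma bound_ev:
  fixes p :: real and m :: nat
  assumes p0: "0 < p" and p1: "p < 1"
  shows "eventually (\<lambda>n. (real (aa n) + real ((m + Lf p n) choose m))^2 \<le> ln (real n) ^ (4*m+8)) sequentially"
proof -
  define \<gamma> where "\<gamma> = 4 / (- ln (1 - p))"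
  have \<gamma>0: "\<gamma> > 0" unfolding \<gamma>_def using p0 p1 by simp
  define Y where "Y = max 3 (real m + 3 + \<gamma>)"
  show ?thesis using ev_ln_ge[of Y]
  proof eventually_elim
    case (elim n)
    define y where "y = ln (real n)"
    have yY: "y \<ge> Y" using elim y_def by simp
    have y3: "y \<ge> 3" using yY unfolding Y_def by simp
    have y1: "y \<ge> 1" using y3 by simp
    have ym: "y \<ge> real m + 3 + \<gamma>" using yY unfolding Y_def by simp
    define L where "L = Lf p n"
    have Lb: "real L \<le> \<gamma> * y + 3"
    proof -
      have "\<gamma> * y \<ge> 0" using \<gamma>0 y1 by simp
      then have "real (nat \<lceil>\<gamma> * y\<rceil>) \<le> \<gamma> * y + 1" by linarith
      then show ?thesis unfolding L_def Lf_def \<gamma>_def y_def by simp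
    qed
    have mL: "real (m + L) \<le> y * y"
    proof -
      have "real (m + L) \<le> real m + 3 + \<gamma> * y" using Lb by simp
      also have "\<dots> \<le> (real m + 3) * y + \<gamma> * y"
      proof -
        have "(real m + 3) * 1 \<le> (real m + 3) * y" using y1 by (intro mult_left_mono) auto
        then show ?thesis by simp
      qed
      also have "\<dots> = (real m + 3 + \<gamma>) * y" by (simp add: algebra_simps)
      also have "\<dots> \<le> y * y" using ym y1 by (intro mult_right_mono) auto
      finally show ?thesis .
    qed
    have R: "real ((m + L) choose m) \<le> y ^ (2*m)"
    proof -
      have "real ((m + L) choose m) \<le> real ((m + L) ^ m)" using choose_le_pow by (simp only: of_nat_le_iff)
      also have "\<dots> = real (m + L) ^ m" by simp
      also have "\<dots> \<le> (y * y) ^ m" using mL by (intro power_mono) auto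
      also have "\<dots> = y ^ (2*m)" by (simp add: power_mult power2_eq_square)
      finally show ?thesis .
    qed
    have A: "real (aa n) \<le> y^2 + 1" using aa_le[of n] unfolding y_def .
    have p1': "y ^ 2 \<le> y ^ (2*m+2)" using y1 by (intro power_increasing) auto
    have p2': "y ^ (2*m) \<le> y ^ (2*m+2)" using y1 by (intro power_increasing) auto
    have one: "1 \<le> y ^ (2*m+2)" using one_le_power[OF y1, of "2*m+2"] .
    have s: "real (aa n) + real ((m + L) choose m) \<le> 3 * y ^ (2*m+2)" using A R p1' p2' one by linarith
    have s0: "0 \<le> real (aa n) + real ((m + L) choose m)" by simp
    have "(real (aa n) + real ((m + L) choose m))^2 \<le> (3 * y ^ (2*m+2))^2"
      using s s0 by (intro power_mono) auto
    also have "\<dots> = 9 * y ^ (4*m+4)"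
    proof -
      have e1: "(3 * y ^ (2*m+2))^2 = 9 * (y ^ (2*m+2))^2" by (simp add: power_mult_distrib)
      have e2: "(2*m+2)*2 = 4*m+4" by simp
      have "(y ^ (2*m+2))^2 = y ^ (4*m+4)" by (simp only: power_mult[symmetric] e2)
      then show ?thesis using e1 by simp
    qed
    also have "\<dots> \<le> y ^ 4 * y ^ (4*m+4)"
    proof (rule mult_right_mono)
      have "(3::real) ^ 4 \<le> y ^ 4" using y3 by (intro power_mono) auto
      then show "9 \<le> y ^ 4" by simp
      show "0 \<le> y ^ (4*m+4)" using y1 by simp
    qed
    also have "\<dots> = y ^ (4*m+8)" by (simp add: power_add[symmetric] add.commute)
    finally show ?case unfolding L_def y_def .
  qed
qed

lemma pr_or5:
  fixes p :: real assumes "0 \<le> p" "p \<le> 1" "finite E"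
  shows "pr p E (\<lambda>G. P1 G \<or> P2 G \<or> P3 G \<or> P4 G \<or> P5 G) \<le> pr p E P1 + pr p E P2 + pr p E P3 + pr p E P4 + pr p E P5"
proof -
  have "pr p E (\<lambda>G. P1 G \<or> P2 G \<or> P3 G \<or> P4 G \<or> P5 G) \<le> pr p E P1 + pr p E (\<lambda>G. P2 G \<or> P3 G \<or> P4 G \<or> P5 G)"
    by (rule pr_or[OF assms])
  moreover have "pr p E (\<lambda>G. P2 G \<or> P3 G \<or> P4 G \<or> P5 G) \<le> pr p E P2 + pr p E (\<lambda>G. P3 G \<or> P4 G \<or> P5 G)"
    by (rule pr_or[OF assms])
  moreover have "pr p E (\<lambda>G. P3 G \<or> P4 G \<or> P5 G) \<le> pr p E P3 + pr p E (\<lambda>G. P4 G \<or> P5 G)"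
    by (rule pr_or[OF assms])
  moreover have "pr p E (\<lambda>G. P4 G \<or> P5 G) \<le> pr p E P4 + pr p E P5"
    by (rule pr_or[OF assms])
  ultimately show ?thesis by linarith
qed


theorem theorem4:
  fixes p :: real and VF :: "nat set" and EF :: "nat set set" and cF :: real
  assumes "0 < p" and "p < 1"
    and "is_graph VF EF"
    and "cF \<ge> 0"
    and "(\<lambda>n. real (wsat n (all_edges n) VF EF) / real n) \<longlonglongrightarrow> cF"
  shows "\<exists>D::real. (\<lambda>n. prob_Gnp n p
           (\<lambda>G. real (rk_sat n G VF EF) \<le> of_int \<lfloor>cF\<rfloor> * real n + ln (real n) powr D))
         \<longlonglongrightarrow> 1"
proof -
  note p0 = assms(1) and p1 = assms(2) and gF = assms(3) and c0 = assms(4) and lim = assms(5)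
  have p0': "0 \<le> p" and p1': "p \<le> 1" using p0 p1 by auto
  have fVF: "finite VF" using gF unfolding is_graph_def by blast
  have grF: "\<forall>e\<in>EF. \<exists>a b. a\<in>VF \<and> b\<in>VF \<and> a\<noteq>b \<and> e={a,b}" using gF unfolding is_graph_def by blast
  have EFne: "EF \<noteq> {}"
  proof
    assume "EF = {}"
    then show False using not_conv_noedge lim by blast
  qed
  then obtain e0 where e0: "e0 \<in> EF" by blast
  obtain x y where xyV: "x \<in> VF" "y \<in> VF" and xy2: "x \<noteq> y" and e0xy: "e0 = {x, y}"
    using grF[rule_format, OF e0] by auto
  have xy: "{x, y} \<in> EF" using e0 e0xy by simp
  define k where "k = nat \<lfloor>cF\<rfloor>"
  have rk: "real k = of_int \<lfloor>cF\<rfloor>" unfolding k_def using c0 by simp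
  have ck: "cF < real k + 1" using rk by linarith
  define \<epsilon> where "\<epsilon> = (real k + 1 - cF) / 2"
  have \<epsilon>0: "\<epsilon> > 0" unfolding \<epsilon>_def using ck by simp
  define s where "s = card VF"
  have "eventually (\<lambda>j. real (wsat j (all_edges j) VF EF) / real j < cF + \<epsilon>) sequentially"
    using order_tendstoD(2)[OF lim] \<epsilon>0 by simp
  then obtain J0 where J0: "\<And>j. j \<ge> J0 \<Longrightarrow> real (wsat j (all_edges j) VF EF) / real j < cF + \<epsilon>"
    unfolding eventually_sequentially by blast
  define m where "m = max (Suc J0) (nat \<lceil>(cF + \<epsilon>) * real s / \<epsilon>\<rceil> + 1)"
  have mJ: "m + s \<ge> J0" unfolding m_def by simp
  have mpos: "m + s > 0" unfolding m_def by simp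
  have mbig: "real m > (cF + \<epsilon>) * real s / \<epsilon>"
  proof -
    have "real m \<ge> real (nat \<lceil>(cF + \<epsilon>) * real s / \<epsilon>\<rceil>) + 1" unfolding m_def by simp
    moreover have "real (nat \<lceil>(cF + \<epsilon>) * real s / \<epsilon>\<rceil>) \<ge> (cF + \<epsilon>) * real s / \<epsilon>" by linarith
    ultimately show ?thesis by linarith
  qed
  have exH: "\<exists>H. wsat_process (m+s) (all_edges (m+s)) VF EF H \<and> card H = card (all_edges (m+s))"
    unfolding wsat_process_def by (intro exI[of _ "all_edges (m+s)"] conjI exI[of _ "[]"]) auto
  obtain H where Hp: "wsat_process (m+s) (all_edges (m+s)) VF EF H"
    and cHw: "card H = wsat (m+s) (all_edges (m+s)) VF EF"
  proof -
    have "\<exists>k. \<exists>H. wsat_process (m+s) (all_edges (m+s)) VF EF H \<and> card H = k" using exH by blast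
    from LeastI_ex[OF this] show ?thesis using that unfolding wsat_def by blast
  qed
  have cH: "card H < (k+1) * m"
  proof -
    have "real (card H) / real (m+s) < cF + \<epsilon>" using J0[OF mJ] cHw by simp
    then have a: "real (card H) < (cF + \<epsilon>) * real (m+s)" using mpos by (simp add: divide_less_eq)
    have b: "(cF + \<epsilon>) * real s < \<epsilon> * real m" using mbig \<epsilon>0 by (simp add: field_simps)
    have "(cF + \<epsilon>) * real (m+s) = (cF + \<epsilon>) * real m + (cF + \<epsilon>) * real s" by (simp add: algebra_simps)
    also have "\<dots> < (cF + \<epsilon>) * real m + \<epsilon> * real m" using b by simp
    also have "\<dots> = (real k + 1) * real m" unfolding \<epsilon>_def by (simp add: field_simps)
    finally have "real (card H) < (real k + 1) * real m" using a by simp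
    then show ?thesis by (metis of_nat_1 of_nat_add of_nat_less_iff of_nat_mult)
  qed
  define b where "b = Suc (Max (insert 0 VF))"
  have bVF: "\<forall>v\<in>VF. v < b" unfolding b_def using fVF by (simp add: le_imp_less_Suc)
  have sVF: "card VF \<le> s" unfolding s_def by simp
  define NF where "NF = {v. {x, v} \<in> EF}"
  have NFV: "NF \<subseteq> VF"
  proof
    fix v assume "v \<in> NF"
    then have "{x, v} \<in> EF" unfolding NF_def by simp
    then obtain a c where "a \<in> VF" "c \<in> VF" "{x, v} = {a, c}" using grF by blast
    then show "v \<in> VF" by (auto simp: doubleton_eq_iff)
  qed
  define Zn where "Zn = {b..<b+s}"
  define EP4 where "EP4 = EF \<union> {{z, v} | z v. z \<in> Zn \<and> v \<in> NF - {y}}"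
  have gr2: "\<forall>e\<in>all_edges (m+s). \<exists>a c. a\<in>{..<m+s} \<and> c\<in>{..<m+s} \<and> a\<noteq>c \<and> e={a,c}"
    unfolding all_edges_def by auto
  have gr4: "\<forall>e\<in>EP4. \<exists>a c. a\<in>VF \<union> Zn \<and> c\<in>VF \<union> Zn \<and> a\<noteq>c \<and> e={a,c}"
  proof
    fix e assume "e \<in> EP4"
    then consider "e \<in> EF" | z v where "z \<in> Zn" "v \<in> NF - {y}" "e = {z, v}" unfolding EP4_def by blast
    then show "\<exists>a c. a\<in>VF \<union> Zn \<and> c\<in>VF \<union> Zn \<and> a\<noteq>c \<and> e={a,c}"
    proof cases
      case 1
      then obtain a c where "a\<in>VF" "c\<in>VF" "a\<noteq>c" "e={a,c}" using grF by blast
      then show ?thesis by blast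
    next
      case (2 z v)
      have "v \<in> VF" using 2 NFV by blast
      then have "v < b" using bVF by blast
      moreover have "z \<ge> b" using 2 unfolding Zn_def by simp
      ultimately have "z \<noteq> v" by simp
      then show ?thesis using 2 \<open>v \<in> VF\<close> by blast
    qed
  qed
  have fVP4: "finite (VF \<union> Zn)" using fVF unfolding Zn_def by simp
  have S1: "{x, y} \<subseteq> VF" using xyV by simp
  have S3: "insert x NF \<subseteq> VF" using xyV NFV by simp
  have S4: "{x, y} \<union> Zn \<subseteq> VF \<union> Zn" using xyV by auto
  let ?E = "\<lambda>n. all_edges n"
  define b1 where "b1 n = pr p (?E n) (\<lambda>G. \<not> EXT n G {..<aa n} VF EF {x, y})" for n
  define b2 where "b2 n = pr p (?E n) (\<lambda>G. \<not> EXT n G {..<aa n} {..<m+s} (all_edges (m+s)) {..<m})" for n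
  define b3 where "b3 n = pr p (?E n) (\<lambda>G. \<not> EXT n G {..<aa n} VF EF (insert x NF))" for n
  define b4 where "b4 n = pr p (?E n) (\<lambda>G. \<not> EXT n G {..<aa n} (VF \<union> Zn) EP4 ({x, y} \<union> Zn))" for n
  define b5 where "b5 n = pr p (?E n) (\<lambda>G. \<not> NoInd n G (Lf p n))" for n
  have l1: "b1 \<longlonglongrightarrow> 0" unfolding b1_def by (rule EXT_whp[OF fVF grF S1 p0 p1'])
  have l2: "b2 \<longlonglongrightarrow> 0" unfolding b2_def by (rule EXT_whp[OF _ gr2 _ p0 p1']) auto
  have l3: "b3 \<longlonglongrightarrow> 0" unfolding b3_def by (rule EXT_whp[OF fVF grF S3 p0 p1'])
  have l4: "b4 \<longlonglongrightarrow> 0" unfolding b4_def by (rule EXT_whp[OF fVP4 gr4 S4 p0 p1'])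
  have l5: "b5 \<longlonglongrightarrow> 0" unfolding b5_def by (rule noind_whp[OF p0 p1])
  define bad where "bad n = b1 n + b2 n + b3 n + b4 n + b5 n" for n
  have lbad: "bad \<longlonglongrightarrow> 0"
    unfolding bad_def using tendsto_add[OF tendsto_add[OF tendsto_add[OF tendsto_add[OF l1 l2] l3] l4] l5] by simp
  define D where "D = 4*m+8"
  let ?P = "\<lambda>n G. real (rk_sat n G VF EF) \<le> of_int \<lfloor>cF\<rfloor> * real n + ln (real n) powr real D"
  have ev: "eventually (\<lambda>n. 1 - bad n \<le> prob_Gnp n p (?P n)) sequentially"
    using aa_le_n bound_ev[OF p0 p1, of m] eventually_ge_at_top[of "3::nat"]
  proof eventually_elim
    case (elim n)
    have n3: "real n \<ge> 3" using elim(3) by simp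
    have lnpos: "ln (real n) > 0" using n3 by simp
    define Good where "Good G \<longleftrightarrow> EXT n G {..<aa n} VF EF {x, y} \<and>
        EXT n G {..<aa n} {..<m+s} (all_edges (m+s)) {..<m} \<and>
        EXT n G {..<aa n} VF EF (insert x NF) \<and>
        EXT n G {..<aa n} (VF \<union> Zn) EP4 ({x, y} \<union> Zn) \<and> NoInd n G (Lf p n)" for G
    have GP: "?P n G" if GE: "G \<subseteq> ?E n" and GG: "Good G" for G
    proof -
      have e1: "EXT n G {..<aa n} VF EF {x, y}" using GG unfolding Good_def by blast
      have e2: "EXT n G {..<aa n} {..<m+s} (all_edges (m+s)) {..<m}" using GG unfolding Good_def by blast
      have e3: "EXT n G {..<aa n} VF EF (insert x {v. {x, v} \<in> EF})" using GG unfolding Good_def NF_def by blast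
      have e4: "EXT n G {..<aa n} (VF \<union> {b..<b+s}) (EF \<union> {{z, v} | z v. z \<in> {b..<b+s} \<and> v \<in> {v. {x, v} \<in> EF} - {y}})
                 ({x, y} \<union> {b..<b+s})" using GG unfolding Good_def NF_def Zn_def EP4_def by blast
      have e5: "NoInd n G (Lf p n)" using GG unfolding Good_def by blast
      have rkle: "rk_sat n G VF EF \<le> k * n + (aa n + ((m + Lf p n) choose m))^2"
        by (rule det[OF GE gF xy xy2 e1 e2 e3 e4 bVF sVF e5 Hp cH elim(1)])
      then have "real (rk_sat n G VF EF) \<le> real k * real n + (real (aa n) + real ((m + Lf p n) choose m))^2"
        by (metis of_nat_add of_nat_le_iff of_nat_mult of_nat_power)
      also have "\<dots> \<le> real k * real n + ln (real n) ^ D" using elim(2) unfolding D_def by simp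
      also have "ln (real n) ^ D = ln (real n) powr real D" using lnpos by (simp add: powr_realpow)
      finally show ?thesis using rk by simp
    qed
    have fE: "finite (?E n)" by (rule finite_all_edges)
    have "pr p (?E n) (\<lambda>G. \<not> Good G) \<le> pr p (?E n) (\<lambda>G. \<not> EXT n G {..<aa n} VF EF {x, y} \<or>
        \<not> EXT n G {..<aa n} {..<m+s} (all_edges (m+s)) {..<m} \<or>
        \<not> EXT n G {..<aa n} VF EF (insert x NF) \<or>
        \<not> EXT n G {..<aa n} (VF \<union> Zn) EP4 ({x, y} \<union> Zn) \<or> \<not> NoInd n G (Lf p n))"
      by (rule pr_mono[OF p0' p1' fE]) (auto simp: Good_def)
    also have "\<dots> \<le> bad n" unfolding bad_def b1_def b2_def b3_def b4_def b5_def
      by (rule pr_or5[OF p0' p1' fE])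
    finally have nb: "pr p (?E n) (\<lambda>G. \<not> Good G) \<le> bad n" .
    have "1 - bad n \<le> 1 - pr p (?E n) (\<lambda>G. \<not> Good G)" using nb by simp
    also have "\<dots> = pr p (?E n) Good"
      using pr_not[OF p0' p1' fE, of Good] by simp
    also have "\<dots> \<le> pr p (?E n) (?P n)" by (rule pr_mono[OF p0' p1' fE]) (use GP in blast)
    also have "\<dots> = prob_Gnp n p (?P n)" by (simp add: prob_Gnp_pr)
    finally show ?case .
  qed
  have ev2: "eventually (\<lambda>n. prob_Gnp n p (?P n) \<le> 1) sequentially"
    by (intro always_eventually allI) (simp add: prob_Gnp_pr pr_le1[OF p0' p1' finite_all_edges])
  have l1b: "(\<lambda>n. 1 - bad n) \<longlonglongrightarrow> 1" using tendsto_diff[OF tendsto_const lbad, of 1] by simp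
  have "(\<lambda>n. prob_Gnp n p (?P n)) \<longlonglongrightarrow> 1"
    by (rule tendsto_sandwich[OF ev ev2 l1b tendsto_const])
  then show ?thesis by blast
qed


end
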